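(* Let $\omega$ be a weight satisfying the standing assumptions below, with monic planar orthogonal polynomials $(p_k)$ satisfying the three-term recurrence $z\,p_k(z)=p_{k+1}(z)+b_kp_k(z)+c_kp_{k-1}(z)$. Then for all integers $p_1,p_2\ge0$ and $N\ge1$: (1) $$M^{\mathbb C}_{p_1,p_2,N}=\sum_{k=0}^{N-1}\sum_{j=k-p_1\wedge p_2}^{k+p_1\wedge p_2}\frac{h_j}{h_k}(A^{p_1})^j_k(A^{p_2})^j_k,$$ and in particular $M^{\mathbb C}_{p,0,N}=\sum_{k=0}^{N-1}(A^p)^k_k$. (2) $$M^{\mathbb H}_{p_1,p_2,N}=\frac12\sum_{k=0}^{N-1}\mathfrak m_{p_1,p_2,k},$$ and in particular, for the holomorphic moments, $$M^{\mathbb H}_{p,0,N}=\frac12M^{\mathbb C}_{p,0,2N}-\frac12\sum_{j=0}^{N-1}\mu_{N,j}(A^p)^{2N}_{2j},$$ where $M^{\mathbb C}_{p,0,2N}$ is the moment of the complex ensemble with the same weight and $2N$ points.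
   Context: Let $dA(z)=d^2z/\pi$. For a weight $\omega:\mathbb C\to[0,\infty)$ and $N\ge1$, the complex ensemble is the probability density on $\mathbb C^N$ proportional to $\prod_{j<k}|z_j-z_k|^2\prod_{j=1}^N\omega(z_j)\,dA(z_j)$, and the symplectic ensemble is the probability density proportional to $\prod_{j<k}|z_j-z_k|^2|z_j-\bar z_k|^2\prod_{j=1}^N|z_j-\bar z_j|^2\omega(z_j)\,dA(z_j)$. Spectral moments: $M^{\mathbb C}_{p_1,p_2,N}=\mathbb E^{\mathbb C}_N[\sum_{j=1}^Nz_j^{p_1}\bar z_j^{p_2}]$ and $M^{\mathbb H}_{p_1,p_2,N}=\mathbb E^{\mathbb H}_N[\sum_{j=1}^Nz_j^{p_1}\bar z_j^{p_2}]$, expectations w.r.t. the complex and symplectic ensemble respectively. Standing assumptions: $\omega\,dA$ has finite and real moments $\int z^j\bar z^k\omega\,dA\in\mathbb R$, and the inner product $\langle f,g\rangle=\int_{\mathbb C}f(z)\overline{g(z)}\omega(z)\,dA(z)$ on real polynomials is positive definite, with monic orthogonal polynomials $(p_k)_{k\ge0}$, $\langle p_j,p_k\rangle=h_k\delta_{jk}$; $p_{-1}\equiv0$; moreover $h_{2l+1}-c_{2l+1}h_{2l}\neq0$ for all $l$. Coefficients $(A^p)^j_k$: defined by $z^pp_k(z)=\sum_{j=k-p}^{k+p}(A^p)^j_kp_j(z)$, with $(A^p)^j_k=0$ if $j<0$ or $|j-k|>p$ (so $(A^0)^j_k=\delta_{jk}$). Symplectic quantities: $r_k=2(h_{2k+1}-c_{2k+1}h_{2k})$;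 $\lambda_l=\frac{h_{2l+2}-c_{2l+2}h_{2l+1}}{h_{2l+1}-c_{2l+1}h_{2l}}$; $\mu_{k,j}=\prod_{l=j}^{k-1}\lambda_l$ (empty product $=1$). Define $(B^p)^{2n+1}_{2k+1}=(A^p)^{2n+1}_{2k+1}$, $(B^p)^{2n}_{2k+1}=(A^p)^{2n}_{2k+1}-\lambda_n(A^p)^{2n+2}_{2k+1}$, $(B^p)^{2n+1}_{2k}=\sum_{j=0}^k\mu_{k,j}(A^p)^{2n+1}_{2j}$, $(B^p)^{2n}_{2k}=\sum_{j=0}^k\mu_{k,j}(A^p)^{2n}_{2j}-\lambda_n\sum_{j=0}^k\mu_{k,j}(A^p)^{2n+2}_{2j}$, and $$\mathfrak m_{p_1,p_2,k}=\sum_{n=k-\lfloor p_1/2\rfloor}^{k+\lfloor p_1/2\rfloor}\tfrac{r_n}{r_k}(B^{p_1})^{2n+1}_{2k+1}(B^{p_2})^{2n}_{2k}+\sum_{n=k-\lfloor p_2/2\rfloor}^{k+\lfloor p_2/2\rfloor}\tfrac{r_n}{r_k}(B^{p_1})^{2n}_{2k}(B^{p_2})^{2n+1}_{2k+1}-\sum_{n=k-\lfloor (p_1+1)/2\rfloor}^{k+\lfloor (p_1+1)/2\rfloor}\tfrac{r_n}{r_k}(B^{p_1})^{2n}_{2k+1}(B^{p_2})^{2n+1}_{2k}-\sum_{n=k-\lfloor (p_2+1)/2\rfloor}^{k+\lfloor (p_2+1)/2\rfloor}\tfrac{r_n}{r_k}(B^{p_1})^{2n+1}_{2k}(B^{p_2})^{2n}_{2k+1},$$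 where terms with $n<0$ are omitted. Notation $a\wedge b=\min\{a,b\}$. *)

theory Defs
  imports "HOL-Analysis.Analysis" "HOL-Computational_Algebra.Polynomial"
begin

definition dA :: "complex measure" where
  "dA = density lborel (\<lambda>_. ennreal (1 / pi))"

text \<open>N-point configurations are functions nat => complex, restricted to {..<N}
  (product measure of dA).\<close>

definition confM :: "nat \<Rightarrow> (nat \<Rightarrow> complex) measure" where
  "confM N = PiM {..<N} (\<lambda>_. dA)"

definition weightC :: "(complex \<Rightarrow> real) \<Rightarrow> nat \<Rightarrow> (nat \<Rightarrow> complex) \<Rightarrow> real" where
  "weightC \<omega> N z = (\<Prod>j<N. \<Prod>k\<in>{j<..<N}. (cmod (z j - z k))\<^sup>2) * (\<Prod>j<N. \<omega> (z j))"

definition weightH :: "(complex \<Rightarrow> real) \<Rightarrow> nat \<Rightarrow> (nat \<Rightarrow> complex) \<Rightarrow> real" where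
  "weightH \<omega> N z = (\<Prod>j<N. \<Prod>k\<in>{j<..<N}. (cmod (z j - z k))\<^sup>2 * (cmod (z j - cnj (z k)))\<^sup>2)
     * (\<Prod>j<N. (cmod (z j - cnj (z j)))\<^sup>2 * \<omega> (z j))"

definition ens_expect :: "nat \<Rightarrow> ((nat \<Rightarrow> complex) \<Rightarrow> real) \<Rightarrow> ((nat \<Rightarrow> complex) \<Rightarrow> complex) \<Rightarrow> complex" where
  "ens_expect N W F =
     (\<integral>z. F z * complex_of_real (W z) \<partial>confM N) / complex_of_real (\<integral>z. W z \<partial>confM N)"

definition power_sum :: "nat \<Rightarrow> nat \<Rightarrow> nat \<Rightarrow> (nat \<Rightarrow> complex) \<Rightarrow> complex" where
  "power_sum p1 p2 N z = (\<Sum>j<N. z j ^ p1 * cnj (z j) ^ p2)"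

definition momC :: "(complex \<Rightarrow> real) \<Rightarrow> nat \<Rightarrow> nat \<Rightarrow> nat \<Rightarrow> complex" where
  "momC \<omega> p1 p2 N = ens_expect N (weightC \<omega> N) (power_sum p1 p2 N)"

definition momH :: "(complex \<Rightarrow> real) \<Rightarrow> nat \<Rightarrow> nat \<Rightarrow> nat \<Rightarrow> complex" where
  "momH \<omega> p1 p2 N = ens_expect N (weightH \<omega> N) (power_sum p1 p2 N)"

definition ip :: "(complex \<Rightarrow> real) \<Rightarrow> real poly \<Rightarrow> real poly \<Rightarrow> complex" where
  "ip \<omega> f g = (\<integral>z. poly (map_poly complex_of_real f) z * cnj (poly (map_poly complex_of_real g) z)
                    * complex_of_real (\<omega> z) \<partial>dA)"

definition hnorm :: "(complex \<Rightarrow> real) \<Rightarrow> (nat \<Rightarrow> real poly) \<Rightarrow> nat \<Rightarrow> real" where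
  "hnorm \<omega> P k = Re (ip \<omega> (P k) (P k))"

definition expand_coeff :: "(nat \<Rightarrow> real poly) \<Rightarrow> real poly \<Rightarrow> nat \<Rightarrow> real" where
  "expand_coeff P q = (THE a. (\<forall>j. degree q < j \<longrightarrow> a j = 0) \<and>
                               q = (\<Sum>j\<le>degree q. smult (a j) (P j)))"

text \<open>(A^p)^j_k : z^p P_k(z) = sum_j (A^p)^j_k P_j(z).\<close>
definition Acoef :: "(nat \<Rightarrow> real poly) \<Rightarrow> nat \<Rightarrow> nat \<Rightarrow> nat \<Rightarrow> real" where
  "Acoef P p j k = expand_coeff P (monom 1 p * P k) j"

definition rr :: "(nat \<Rightarrow> real) \<Rightarrow> (nat \<Rightarrow> real) \<Rightarrow> nat \<Rightarrow> real" where
  "rr h c k = 2 * (h (2*k+1) - c (2*k+1) * h (2*k))"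

definition lam :: "(nat \<Rightarrow> real) \<Rightarrow> (nat \<Rightarrow> real) \<Rightarrow> nat \<Rightarrow> real" where
  "lam h c l = (h (2*l+2) - c (2*l+2) * h (2*l+1)) / (h (2*l+1) - c (2*l+1) * h (2*l))"

definition mu :: "(nat \<Rightarrow> real) \<Rightarrow> (nat \<Rightarrow> real) \<Rightarrow> nat \<Rightarrow> nat \<Rightarrow> real" where
  "mu h c k j = (\<Prod>l\<in>{j..<k}. lam h c l)"

text \<open>B_odd_odd A p n k = (B^p)^{2n+1}_{2k+1}, B_even_odd = (B^p)^{2n}_{2k+1},
  B_odd_even = (B^p)^{2n+1}_{2k}, B_even_even = (B^p)^{2n}_{2k}.\<close>
definition B_oo :: "(nat \<Rightarrow> nat \<Rightarrow> nat \<Rightarrow> real) \<Rightarrow> nat \<Rightarrow> nat \<Rightarrow> nat \<Rightarrow> real" where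
  "B_oo A p n k = A p (2*n+1) (2*k+1)"

definition B_eo :: "(nat \<Rightarrow> real) \<Rightarrow> (nat \<Rightarrow> real) \<Rightarrow> (nat \<Rightarrow> nat \<Rightarrow> nat \<Rightarrow> real) \<Rightarrow> nat \<Rightarrow> nat \<Rightarrow> nat \<Rightarrow> real" where
  "B_eo h c A p n k = A p (2*n) (2*k+1) - lam h c n * A p (2*n+2) (2*k+1)"

definition B_oe :: "(nat \<Rightarrow> real) \<Rightarrow> (nat \<Rightarrow> real) \<Rightarrow> (nat \<Rightarrow> nat \<Rightarrow> nat \<Rightarrow> real) \<Rightarrow> nat \<Rightarrow> nat \<Rightarrow> nat \<Rightarrow> real" where
  "B_oe h c A p n k = (\<Sum>j\<le>k. mu h c k j * A p (2*n+1) (2*j))"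

definition B_ee :: "(nat \<Rightarrow> real) \<Rightarrow> (nat \<Rightarrow> real) \<Rightarrow> (nat \<Rightarrow> nat \<Rightarrow> nat \<Rightarrow> real) \<Rightarrow> nat \<Rightarrow> nat \<Rightarrow> nat \<Rightarrow> real" where
  "B_ee h c A p n k = (\<Sum>j\<le>k. mu h c k j * A p (2*n) (2*j))
                      - lam h c n * (\<Sum>j\<le>k. mu h c k j * A p (2*n+2) (2*j))"

text \<open>Natural-number subtraction k - m truncates at 0, which realises
  "terms with n < 0 are omitted".\<close>
definition frak_m :: "(nat \<Rightarrow> real) \<Rightarrow> (nat \<Rightarrow> real) \<Rightarrow> (nat \<Rightarrow> nat \<Rightarrow> nat \<Rightarrow> real) \<Rightarrow> nat \<Rightarrow> nat \<Rightarrow> nat \<Rightarrow> real" where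
  "frak_m h c A p1 p2 k =
     (\<Sum>n\<in>{k - p1 div 2 .. k + p1 div 2}. rr h c n / rr h c k * B_oo A p1 n k * B_ee h c A p2 n k)
   + (\<Sum>n\<in>{k - p2 div 2 .. k + p2 div 2}. rr h c n / rr h c k * B_ee h c A p1 n k * B_oo A p2 n k)
   - (\<Sum>n\<in>{k - (p1+1) div 2 .. k + (p1+1) div 2}. rr h c n / rr h c k * B_eo h c A p1 n k * B_oe h c A p2 n k)
   - (\<Sum>n\<in>{k - (p2+1) div 2 .. k + (p2+1) div 2}. rr h c n / rr h c k * B_oe h c A p1 n k * B_eo h c A p2 n k)"

end

theory Submission
  imports Defs
begin

definition Bf :: "(nat \<Rightarrow> nat \<Rightarrow> real) \<Rightarrow> real poly \<Rightarrow> real poly \<Rightarrow> real" where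
  "Bf m f g = (\<Sum>a\<le>degree f. \<Sum>b\<le>degree g. coeff f a * coeff g b * m a b)"

lemma sum_atMost_ext:
  fixes d n :: nat
  assumes "\<And>a. d < a \<Longrightarrow> F a = 0" "d < n"
  shows "sum F {..d} = sum F {..<n}"
  by (rule sum.mono_neutral_left) (use assms in \<open>auto simp: not_le[symmetric]\<close>)

lemma Bf_ext:
  assumes "degree f < n" "degree g < k"
  shows "Bf m f g = (\<Sum>a<n. \<Sum>b<k. coeff f a * coeff g b * m a b)"
proof -
  have "Bf m f g = (\<Sum>a<n. \<Sum>b\<le>degree g. coeff f a * coeff g b * m a b)"
    unfolding Bf_def by (rule sum_atMost_ext) (use assms in \<open>auto simp: coeff_eq_0\<close>)
  also have "\<dots> = (\<Sum>a<n. \<Sum>b<k. coeff f a * coeff g b * m a b)"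
    by (intro sum.cong refl sum_atMost_ext) (use assms in \<open>auto simp: coeff_eq_0\<close>)
  finally show ?thesis .
qed

lemma Bf_add1: "Bf m (f + g) h = Bf m f h + Bf m g h"
proof -
  define n where "n = Suc (max (degree f) (degree g))"
  have d: "degree (f+g) < n" "degree f < n" "degree g < n"
    using degree_add_le_max[of f g] by (auto simp: n_def)
  show ?thesis
    unfolding Bf_ext[OF d(1) lessI] Bf_ext[OF d(2) lessI] Bf_ext[OF d(3) lessI]
    by (simp add: sum.distrib[symmetric] algebra_simps)
qed

lemma Bf_add2: "Bf m h (f + g) = Bf m h f + Bf m h g"
proof -
  define n where "n = Suc (max (degree f) (degree g))"
  have d: "degree (f+g) < n" "degree f < n" "degree g < n"
    using degree_add_le_max[of f g] by (auto simp: n_def)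
  show ?thesis
    unfolding Bf_ext[OF lessI d(1)] Bf_ext[OF lessI d(2)] Bf_ext[OF lessI d(3)]
    by (simp add: sum.distrib[symmetric] algebra_simps)
qed

lemma Bf_smult1: "Bf m (smult c f) h = c * Bf m f h"
proof -
  have d: "degree (smult c f) < Suc (degree f)" by (simp add: le_imp_less_Suc)
  show ?thesis unfolding Bf_ext[OF d lessI] Bf_ext[OF lessI lessI]
    by (simp add: sum_distrib_left algebra_simps)
qed

lemma Bf_smult2: "Bf m h (smult c f) = c * Bf m h f"
proof -
  have d: "degree (smult c f) < Suc (degree f)" by (simp add: le_imp_less_Suc)
  show ?thesis unfolding Bf_ext[OF lessI d] Bf_ext[OF lessI lessI]
    by (simp add: sum_distrib_left algebra_simps)
qed

lemma Bf_zero1[simp]: "Bf m 0 h = 0" and Bf_zero2[simp]: "Bf m h 0 = 0"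
  by (simp_all add: Bf_def)

lemma Bf_minus1: "Bf m (- f) h = - Bf m f h"
  using Bf_smult1[of m "-1" f h] by simp
lemma Bf_minus2: "Bf m h (- f) = - Bf m h f"
  using Bf_smult2[of m h "-1" f] by simp
lemma Bf_diff1: "Bf m (f - g) h = Bf m f h - Bf m g h"
  using Bf_add1[of m f "-g" h] by (simp add: Bf_minus1)
lemma Bf_diff2: "Bf m h (f - g) = Bf m h f - Bf m h g"
  using Bf_add2[of m h f "-g"] by (simp add: Bf_minus2)

lemma Bf_sum1: "Bf m (\<Sum>i\<in>I. F i) h = (\<Sum>i\<in>I. Bf m (F i) h)"
  by (induction I rule: infinite_finite_induct) (auto simp: Bf_add1)
lemma Bf_sum2: "Bf m h (\<Sum>i\<in>I. F i) = (\<Sum>i\<in>I. Bf m h (F i))"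
  by (induction I rule: infinite_finite_induct) (auto simp: Bf_add2)

lemma Bf_sym: assumes "\<And>a b. m a b = m b a" shows "Bf m f g = Bf m g f"
  unfolding Bf_def by (subst sum.swap) (simp add: assms algebra_simps)

lemma monic_expansion:
  fixes F :: "nat \<Rightarrow> 'a::field poly"
  assumes monic: "\<And>k. degree (F k) = k \<and> lead_coeff (F k) = 1"
  shows "\<exists>a. U = (\<Sum>i\<le>degree U. smult (a i) (F i))"
proof (induction "degree U" arbitrary: U rule: less_induct)
  case less
  show ?case
  proof (cases "degree U = 0")
    case True
    then obtain c where U: "U = [:c:]" by (metis degree_eq_zeroE)
    have "F 0 = 1" using monic[of 0] by (metis degree_eq_zeroE lead_coeff_pCons(2) one_pCons pCons_0_0 coeff_pCons_0 monic)
    then show ?thesis using True U by (intro exI[of _ "\<lambda>_. c"]) (simp add: smult_one)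
  next
    case False
    define d where "d = degree U"
    define V where "V = U - smult (lead_coeff U) (F d)"
    have dF: "degree (F d) = d" "lead_coeff (F d) = 1" using monic[of d] by auto
    have cV: "coeff V d = 0" using dF by (metis V_def d_def coeff_diff coeff_smult mult.right_neutral right_minus_eq)
    have "degree V \<le> d" using dF unfolding V_def
      by (metis d_def degree_diff_le degree_smult_le le_refl order_trans)
    with cV False have "degree V < d"
      by (metis d_def degree_0 le_neq_implies_less leading_coeff_0_iff)
    then obtain a where a: "V = (\<Sum>i\<le>degree V. smult (a i) (F i))"
      using less d_def by blast
    define a' where "a' = (\<lambda>i. if i \<le> degree V then a i else 0)(d := lead_coeff U)"
    have "V = (\<Sum>i\<le>degree V. smult (if i \<le> degree V then a i else 0) (F i))"
      by (subst a) (rule sum.cong, auto)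
    also have "\<dots> = (\<Sum>i<d. smult (if i \<le> degree V then a i else 0) (F i))"
      by (rule sum_atMost_ext, use \<open>degree V < d\<close> in auto)
    also have "\<dots> = (\<Sum>i<d. smult (a' i) (F i))" by (intro sum.cong) (auto simp: a'_def)
    finally have "U = (\<Sum>i<d. smult (a' i) (F i)) + smult (a' d) (F d)"
      by (simp add: V_def a'_def)
    also have "\<dots> = (\<Sum>i\<le>d. smult (a' i) (F i))"
      by (simp add: lessThan_Suc_atMost[symmetric])
    finally show ?thesis using d_def by (intro exI[of _ a']) simp
  qed
qed



locale opalg =
  fixes m :: "nat \<Rightarrow> nat \<Rightarrow> real" and P :: "nat \<Rightarrow> real poly" and b c :: "nat \<Rightarrow> real"
  assumes msym: "\<And>a b'. m a b' = m b' a"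
    and pos: "\<And>f. f \<noteq> 0 \<Longrightarrow> Bf m f f > 0"
    and monic: "\<And>k. degree (P k) = k \<and> lead_coeff (P k) = 1"
    and orth: "\<And>j k. j \<noteq> k \<Longrightarrow> Bf m (P j) (P k) = 0"
    and rec0: "[:0, 1:] * P 0 = P 1 + smult (b 0) (P 0)"
    and rec: "\<And>k. k \<ge> 1 \<Longrightarrow> [:0, 1:] * P k = P (k+1) + smult (b k) (P k) + smult (c k) (P (k-1))"
    and skew: "\<And>l. Bf m (P (2*l+1)) (P (2*l+1)) - c (2*l+1) * Bf m (P (2*l)) (P (2*l)) \<noteq> 0"
begin

abbreviation hh where "hh k \<equiv> Bf m (P k) (P k)"

lemma P_nz: "P k \<noteq> 0"
  using monic[of k] by auto

lemma hh_pos: "hh k > 0"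
  using pos[OF P_nz] .

lemma hh_nz: "hh k \<noteq> 0" using hh_pos[of k] by simp

lemma Bsym: "Bf m f g = Bf m g f" by (rule Bf_sym[OF msym])

lemma expansionP: "\<exists>a. U = (\<Sum>i\<le>degree U. smult (a i) (P i))"
  by (rule monic_expansion[OF monic])

lemma Bf_P_high: assumes "degree U < j" shows "Bf m U (P j) = 0"
proof -
  obtain a where a: "U = (\<Sum>i\<le>degree U. smult (a i) (P i))" using expansionP by blast
  have "Bf m U (P j) = (\<Sum>i\<le>degree U. a i * Bf m (P i) (P j))"
    by (subst a) (simp add: Bf_sum1 Bf_smult1)
  also have "\<dots> = 0" using assms by (intro sum.neutral) (auto simp: orth)
  finally show ?thesis .
qed

lemma Bf_coeff:
  assumes a: "U = (\<Sum>i\<le>d. smult (a i) (P i))" and j: "j \<le> d"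
  shows "Bf m U (P j) = a j * hh j"
proof -
  have "Bf m U (P j) = (\<Sum>i\<le>d. a i * Bf m (P i) (P j))"
    by (subst a) (simp add: Bf_sum1 Bf_smult1)
  also have "\<dots> = a j * hh j"
    by (subst sum.remove[of _ j]) (use j in \<open>auto simp: orth intro!: sum.neutral\<close>)
  finally show ?thesis .
qed

lemma parseval:
  assumes "degree U \<le> D"
  shows "Bf m U V = (\<Sum>j\<le>D. Bf m U (P j) * Bf m V (P j) / hh j)"
proof -
  obtain a where a: "U = (\<Sum>i\<le>degree U. smult (a i) (P i))" using expansionP by blast
  have "Bf m U V = (\<Sum>i\<le>degree U. a i * Bf m (P i) V)"
    by (subst a) (simp add: Bf_sum1 Bf_smult1)
  also have "\<dots> = (\<Sum>i\<le>degree U. Bf m U (P i) * Bf m V (P i) / hh i)"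
    by (intro sum.cong refl) (simp add: Bf_coeff[OF a] hh_nz Bsym[of V])
  also have "\<dots> = (\<Sum>i\<le>D. Bf m U (P i) * Bf m V (P i) / hh i)"
    by (rule sum.mono_neutral_left) (use assms in \<open>auto simp: Bf_P_high\<close>)
  finally show ?thesis .
qed

lemma expand_coeff_eq: "expand_coeff P q j = Bf m q (P j) / hh j"
proof -
  define a where "a = (\<lambda>j. Bf m q (P j) / hh j)"
  obtain a0 where a0: "q = (\<Sum>i\<le>degree q. smult (a0 i) (P i))" using expansionP by blast
  have rep: "q = (\<Sum>i\<le>degree q. smult (a i) (P i))"
    using Bf_coeff[OF a0] by (subst a0) (auto simp: a_def hh_nz intro!: sum.cong)
  have "expand_coeff P q = a"
    unfolding expand_coeff_def
  proof (rule the_equality)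
    show "(\<forall>j. degree q < j \<longrightarrow> a j = 0) \<and> q = (\<Sum>j\<le>degree q. smult (a j) (P j))"
      using rep by (auto simp: a_def Bf_P_high)
  next
    fix a' assume H: "(\<forall>j. degree q < j \<longrightarrow> a' j = 0) \<and> q = (\<Sum>j\<le>degree q. smult (a' j) (P j))"
    show "a' = a"
    proof
      fix j show "a' j = a j"
      proof (cases "j \<le> degree q")
        case True
        then show ?thesis using Bf_coeff[of q a' "degree q" j] H by (simp add: a_def hh_nz)
      next
        case False
        then show ?thesis using H by (simp add: a_def Bf_P_high)
      qed
    qed
  qed
  then show ?thesis by (simp add: a_def)
qed

lemma Acoef_eq: "Acoef P p j k = Bf m (monom 1 p * P k) (P j) / hh j"
  unfolding Acoef_def expand_coeff_eq ..

lemma deg_XP: "degree (monom 1 p * P k) = p + k"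
  using monic[of k] by (simp add: degree_mult_eq P_nz degree_monom_eq)

lemma XP_Suc: "monom (1::'a::comm_ring_1) (Suc p) * F = monom 1 p * ([:0,1:] * F)"
proof -
  have "monom (1::'a::comm_ring_1) (Suc p) = monom 1 p * [:0,1:]"
    using mult_monom[of "1::'a" p 1 1] by (simp add: monom_Suc monom_0 one_pCons)
  then show ?thesis by (simp only: mult.assoc)
qed

lemma band_low: "j + p < k \<Longrightarrow> Bf m (monom 1 p * P k) (P j) = 0"
proof (induction p arbitrary: k)
  case 0
  then show ?case by (simp add: orth)
next
  case (Suc p)
  then have k1: "k \<ge> 1" by simp
  have "monom 1 (Suc p) * P k = monom 1 p * P (k+1) + smult (b k) (monom 1 p * P k)
          + smult (c k) (monom 1 p * P (k-1))"
    unfolding XP_Suc rec[OF k1] by (simp add: algebra_simps)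
  then show ?case using Suc by (simp add: Bf_add1 Bf_smult1)
qed

lemma band_high: "k + p < j \<Longrightarrow> Bf m (monom 1 p * P k) (P j) = 0"
  by (rule Bf_P_high) (simp add: deg_XP)

lemma Acoef_zero: "j + p < k \<or> k + p < j \<Longrightarrow> Acoef P p j k = 0"
  using band_low band_high by (auto simp: Acoef_eq)

lemma complex_diag:
  "Bf m (monom 1 p1 * P k) (monom 1 p2 * P k) / hh k =
     (\<Sum>j\<in>{k - min p1 p2 .. k + min p1 p2}. hh j / hh k * Acoef P p1 j k * Acoef P p2 j k)"
proof -
  have "Bf m (monom 1 p1 * P k) (monom 1 p2 * P k) =
      (\<Sum>j\<le>k+p1. Bf m (monom 1 p1 * P k) (P j) * Bf m (monom 1 p2 * P k) (P j) / hh j)"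
    by (rule parseval) (simp add: deg_XP)
  also have "\<dots> = (\<Sum>j\<le>k+p1. hh j * Acoef P p1 j k * Acoef P p2 j k)"
    by (intro sum.cong refl) (simp add: Acoef_eq hh_nz)
  also have "\<dots> = (\<Sum>j\<in>{k - min p1 p2 .. k + min p1 p2}. hh j * Acoef P p1 j k * Acoef P p2 j k)"
  proof (rule sum.mono_neutral_right)
    show "{k - min p1 p2..k + min p1 p2} \<subseteq> {..k + p1}" by auto
    show "\<forall>i\<in>{..k + p1} - {k - min p1 p2..k + min p1 p2}. hh i * Acoef P p1 i k * Acoef P p2 i k = 0"
    proof
      fix i assume "i \<in> {..k + p1} - {k - min p1 p2..k + min p1 p2}"
      then have "i + p1 < k \<or> k + p1 < i \<or> i + p2 < k \<or> k + p2 < i" by auto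
      then show "hh i * Acoef P p1 i k * Acoef P p2 i k = 0" using Acoef_zero by auto
    qed
  qed simp
  finally show ?thesis by (simp add: sum_divide_distrib)
qed


lemma rep_P: "q = (\<Sum>i\<le>degree q. smult (Bf m q (P i) / hh i) (P i))"
proof -
  obtain a0 where a0: "q = (\<Sum>i\<le>degree q. smult (a0 i) (P i))" using expansionP by blast
  show ?thesis
    using Bf_coeff[OF a0] by (subst a0) (auto simp: hh_nz intro!: sum.cong)
qed

abbreviation HH where "HH \<equiv> (\<lambda>k. Bf m (P k) (P k))"

definition rho where "rho l = hh (2*l+1) - c (2*l+1) * hh (2*l)"
definition tau where "tau l = hh (2*l+2) - c (2*l+2) * hh (2*l+1)"

lemma rho_nz: "rho l \<noteq> 0" using skew[of l] by (simp add: rho_def)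

lemma lam_eq: "lam HH c l = tau l / rho l"
  by (simp add: lam_def tau_def rho_def)

lemma lam_rho: "lam HH c l * rho l = tau l"
  using rho_nz by (simp add: lam_eq)

lemma rr_eq: "rr HH c k = 2 * rho k" by (simp add: rr_def rho_def)

definition g where "g u v = Bf m ([:0,1:] * u) v - Bf m u ([:0,1:] * v)"

lemma g_antisym: "g u v = - g v u"
  by (simp add: g_def Bsym)

lemma g_add1: "g (u + v) w = g u w + g v w" and g_add2: "g w (u + v) = g w u + g w v"
  unfolding g_def distrib_left Bf_add1 Bf_add2 by simp_all
lemma g_smult1: "g (smult a u) w = a * g u w" and g_smult2: "g w (smult a u) = a * g w u"
  unfolding g_def mult_smult_right Bf_smult1 Bf_smult2 by (simp_all add: algebra_simps)
lemma g_sum1: "g (\<Sum>i\<in>I. F i) w = (\<Sum>i\<in>I. g (F i) w)"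
  by (simp add: g_def Bf_sum1 Bf_sum2 sum_distrib_left sum_subtractf)
lemma g_sum2: "g w (\<Sum>i\<in>I. F i) = (\<Sum>i\<in>I. g w (F i))"
  by (simp add: g_def Bf_sum1 Bf_sum2 sum_distrib_left sum_subtractf)
lemma g_zero1[simp]: "g 0 w = 0" and g_zero2[simp]: "g w 0 = 0" by (simp_all add: g_def)

lemma XP_expand: "[:0,1:] * P a = P (a+1) + smult (b a) (P a) + (if a \<ge> 1 then smult (c a) (P (a-1)) else 0)"
  using rec0 rec[of a] by (cases "a = 0") auto

lemma BXP: "Bf m ([:0,1:] * P a) (P j) =
   (if j = a+1 then hh (a+1) else 0) + (if j = a then b a * hh a else 0)
   + (if a \<ge> 1 \<and> j = a - 1 then c a * hh (a-1) else 0)"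
  unfolding XP_expand by (auto simp: Bf_add1 Bf_smult1 orth)

lemma g_PP: "g (P i) (P j) = Bf m ([:0,1:] * P i) (P j) - Bf m ([:0,1:] * P j) (P i)"
  unfolding g_def using Bsym[of "P i" "[:0,1:] * P j"] by simp

lemma gPP_odd: "g (P i) (P (Suc (2*n))) = (if i = 2*n then rho n else 0) - (if i = Suc (Suc (2*n)) then tau n else 0)"
proof -
  consider "i = 2*n" | "i = 2*n+1" | "i = 2*n+2" | "i \<noteq> 2*n" "i \<noteq> 2*n+1" "i \<noteq> 2*n+2" by blast
  then show ?thesis
  proof cases
    case 1 then show ?thesis unfolding g_PP BXP rho_def by auto
  next
    case 2 then show ?thesis unfolding g_PP BXP by auto
  next
    case 3 then show ?thesis unfolding g_PP BXP tau_def by auto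
  next
    case 4 then show ?thesis unfolding g_PP BXP by auto
  qed
qed

lemma gPP_even_odd: "g (P (2*j)) (P (Suc (2*n))) = (if j = n then rho n else 0) - (if j = Suc n then tau n else 0)"
  unfolding gPP_odd by auto

lemma gPP_even_even: "g (P (2*i)) (P (2*j)) = 0"
proof -
  have a: "(2*j = 2*i+1) = False" "(2*i = 2*j+1) = False" "(1 \<le> 2*i \<and> 2*j = 2*i - 1) = False"
     "(1 \<le> 2*j \<and> 2*i = 2*j - 1) = False"
    by presburger+
  show ?thesis unfolding g_PP BXP a if_False by (cases "i = j") simp_all
qed

lemma gPP_odd_odd: "g (P (Suc (2*i))) (P (Suc (2*j))) = 0"
proof -
  have a: "(Suc (2*j) = Suc (2*i)+1) = False" "(Suc (2*i) = Suc (2*j)+1) = False"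
    "(1 \<le> Suc (2*i) \<and> Suc (2*j) = Suc (2*i) - 1) = False" "(1 \<le> Suc (2*j) \<and> Suc (2*i) = Suc (2*j) - 1) = False"
    by presburger+
  show ?thesis unfolding g_PP BXP a if_False by (cases "i = j") simp_all
qed

definition Q where "Q n = (if even n then (\<Sum>j\<le>n div 2. smult (mu HH c (n div 2) j) (P (2*j))) else P n)"

lemma Q_odd: "Q (Suc (2*k)) = P (Suc (2*k))" by (simp add: Q_def)
lemma Q_even: "Q (2*k) = (\<Sum>j\<le>k. smult (mu HH c k j) (P (2*j)))" by (simp add: Q_def)

lemma mu_kk: "mu HH c k k = 1" by (simp add: mu_def)

lemma mu_rec: "j < k \<Longrightarrow> mu HH c k j = lam HH c j * mu HH c k (Suc j)"
  unfolding mu_def by (simp add: prod.atLeast_Suc_lessThan)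

lemma mu_Suc: "j \<le> k \<Longrightarrow> mu HH c (Suc k) j = mu HH c k j * lam HH c k"
  unfolding mu_def by (simp add: prod.atLeastLessThan_Suc)

lemma gQP_even: "g (Q (2*k)) (P (Suc (2*l))) = (if l = k then rho k else 0)"
proof -
  have "g (Q (2*k)) (P (Suc (2*l))) = (\<Sum>j\<le>k. mu HH c k j * ((if j = l then rho l else 0) - (if j = Suc l then tau l else 0)))"
    by (simp add: Q_even g_sum1 g_smult1 gPP_even_odd)
  also have "\<dots> = (\<Sum>j\<le>k. mu HH c k j * (if j = l then rho l else 0)) - (\<Sum>j\<le>k. mu HH c k j * (if j = Suc l then tau l else 0))"
    by (simp add: sum_subtractf[symmetric] right_diff_distrib)
  also have "\<dots> = (if l \<le> k then mu HH c k l * rho l else 0) - (if l + 1 \<le> k then mu HH c k (l+1) * tau l else 0)"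
    by (simp add: if_distrib[of "\<lambda>x. _ * x"] sum.delta cong: if_cong)
  also have "\<dots> = (if l = k then rho k else 0)"
  proof (cases "l < k")
    case True
    then show ?thesis using mu_rec[OF True] lam_rho[of l] by (simp add: algebra_simps)
  qed (auto simp: mu_kk)
  finally show ?thesis .
qed



lemma gQQ_even_even: "g (Q (2*i)) (Q (2*j)) = 0"
  by (simp add: Q_even g_sum1 g_sum2 g_smult1 g_smult2 gPP_even_even)

lemma gPQ_even: "g (P i) (Q (2*n)) = (if i = Suc (2*n) then - rho n else 0)"
proof (cases "even i")
  case True
  then obtain i' where i': "i = 2*i'" by blast
  have "2*i' \<noteq> Suc (2*n)" by presburger
  then show ?thesis using i' by (simp add: Q_even g_sum2 g_smult2 gPP_even_even)
next
  case False
  then obtain i' where i: "i = Suc (2*i')" using oddE by (metis Suc_eq_plus1)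
  show ?thesis unfolding i using gQP_even[of n i'] g_antisym[of "P (Suc (2*i'))" "Q (2*n)"] by auto
qed

lemma gQ_support: "a div 2 \<noteq> d div 2 \<Longrightarrow> g (Q a) (Q d) = 0"
proof -
  assume H: "a div 2 \<noteq> d div 2"
  consider (ee) i j where "a = 2*i" "d = 2*j" | (eo) i j where "a = 2*i" "d = Suc (2*j)"
    | (oe) i j where "a = Suc (2*i)" "d = 2*j" | (oo) i j where "a = Suc (2*i)" "d = Suc (2*j)"
    by (metis evenE oddE Suc_eq_plus1)
  then show ?thesis
  proof cases
    case ee then show ?thesis by (simp add: gQQ_even_even)
  next
    case eo then show ?thesis using H by (simp add: Q_odd gQP_even)
  next
    case oe then show ?thesis using H by (simp add: Q_odd gPQ_even)
  next
    case oo then show ?thesis by (simp add: Q_odd gPP_odd_odd)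
  qed
qed

lemma gQ_pair: "g (Q (2*k)) (Q (Suc (2*k))) = rho k"
  by (simp add: Q_odd gQP_even)

lemma gQ_pair': "g (Q (Suc (2*k))) (Q (2*k)) = - rho k"
  using gQ_pair g_antisym by (metis minus_equation_iff)


lemma sum_even_odd: "(\<Sum>i<2*n. F i) = (\<Sum>j<n. F (2*j) + F (Suc (2*j)))"
  by (induction n) (simp_all add: add.assoc)

lemma monic_expansion_lt:
  fixes F :: "nat \<Rightarrow> 'a::field poly"
  assumes monic: "\<And>k. degree (F k) = k \<and> lead_coeff (F k) = 1" and d: "degree U < M"
  shows "\<exists>u. U = (\<Sum>i<M. smult (u i) (F i))"
proof -
  obtain a where a: "U = (\<Sum>i\<le>degree U. smult (a i) (F i))" using monic_expansion[OF monic] by blast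
  define u where "u i = (if i \<le> degree U then a i else 0)" for i
  have "U = (\<Sum>i\<le>degree U. smult (u i) (F i))" by (subst a) (auto simp: u_def intro!: sum.cong)
  also have "\<dots> = (\<Sum>i<M. smult (u i) (F i))"
    by (rule sum.mono_neutral_left) (use d in \<open>auto simp: u_def\<close>)
  finally show ?thesis by blast
qed

lemma Q_monic: "degree (Q n) = n \<and> lead_coeff (Q n) = 1"
proof (cases "even n")
  case False
  then have "Q n = P n" by (simp add: Q_def)
  then show ?thesis by (simp only:) (rule monic)
next
  case True
  then obtain k where n: "n = 2*k" by blast
  show ?thesis
  proof (cases "k = 0")
    case True
    then have n0: "n = 0" using n by simp
    have "Q 0 = P 0" by (simp add: Q_def mu_kk)
    then show ?thesis unfolding n0 by (simp only:) (rule monic)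
  next
    case False
    define R where "R = (\<Sum>j<k. smult (mu HH c k j) (P (2*j)))"
    have QR: "Q n = P (2*k) + R"
      unfolding n Q_even R_def by (simp add: lessThan_Suc_atMost[symmetric] mu_kk add.commute)
    have "degree R \<le> 2*k - 2"
      unfolding R_def by (rule degree_sum_le) (auto intro!: order.trans[OF degree_smult_le] simp: monic)
    then have dR: "degree R < degree (P (2*k))" using False monic[of "2*k"] by simp
    have "degree (Q n) = 2*k" using degree_add_eq_left[OF dR] monic[of "2*k"] QR by simp
    moreover have "coeff R (2*k) = 0" using dR monic[of "2*k"] by (simp add: coeff_eq_0)
    moreover have "coeff (P (2*k)) (2*k) = 1" using monic[of "2*k"] by metis
    ultimately show ?thesis using QR n by simp
  qed
qed

lemma g_self: "g u u = 0" using g_antisym[of u u] by simp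

lemma skew_parseval:
  assumes dU: "degree U < 2 * Suc D"
  shows "g U V = (\<Sum>n\<le>D. (g U (Q (2*n)) * g V (Q (Suc (2*n))) - g U (Q (Suc (2*n))) * g V (Q (2*n))) / rho n)"
proof -
  obtain u where u: "U = (\<Sum>i<2 * Suc D. smult (u i) (Q i))"
    using monic_expansion_lt[OF Q_monic dU] by blast
  have u2: "U = (\<Sum>j<Suc D. smult (u (2*j)) (Q (2*j)) + smult (u (Suc (2*j))) (Q (Suc (2*j))))"
    using u by (simp only: sum_even_odd)
  have gU: "g U W = (\<Sum>j<Suc D. u (2*j) * g (Q (2*j)) W + u (Suc (2*j)) * g (Q (Suc (2*j))) W)" for W
    by (subst u2) (simp only: g_sum1 g_add1 g_smult1)
  have c1: "g U (Q (Suc (2*n))) = u (2*n) * rho n" if "n \<le> D" for n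
  proof -
    have "g U (Q (Suc (2*n))) = (\<Sum>j<Suc D. if j = n then u (2*n) * rho n else 0)"
      unfolding gU
    proof (intro sum.cong refl)
      fix j assume "j \<in> {..<Suc D}"
      show "u (2*j) * g (Q (2*j)) (Q (Suc (2*n))) + u (Suc (2*j)) * g (Q (Suc (2*j))) (Q (Suc (2*n))) =
          (if j = n then u (2*n) * rho n else 0)"
      proof (cases "j = n")
        case True then show ?thesis by (simp add: gQ_pair g_self)
      next
        case False
        have "2*j div 2 \<noteq> Suc (2*n) div 2" "Suc (2*j) div 2 \<noteq> Suc (2*n) div 2" using False by simp_all
        then show ?thesis using False by (simp add: gQ_support)
      qed
    qed
    also have "\<dots> = u (2*n) * rho n" using that by simp
    finally show ?thesis .
  qed
  have c2: "g U (Q (2*n)) = - u (Suc (2*n)) * rho n" if "n \<le> D" for n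
  proof -
    have "g U (Q (2*n)) = (\<Sum>j<Suc D. if j = n then - u (Suc (2*n)) * rho n else 0)"
      unfolding gU
    proof (intro sum.cong refl)
      fix j assume "j \<in> {..<Suc D}"
      show "u (2*j) * g (Q (2*j)) (Q (2*n)) + u (Suc (2*j)) * g (Q (Suc (2*j))) (Q (2*n)) =
          (if j = n then - u (Suc (2*n)) * rho n else 0)"
      proof (cases "j = n")
        case True then show ?thesis by (simp add: gQ_pair' g_self)
      next
        case False
        have "2*j div 2 \<noteq> 2*n div 2" "Suc (2*j) div 2 \<noteq> 2*n div 2" using False by simp_all
        then show ?thesis using False by (simp add: gQ_support)
      qed
    qed
    also have "\<dots> = - u (Suc (2*n)) * rho n" using that by simp
    finally show ?thesis .
  qed
  have "g U V = (\<Sum>j<Suc D. - u (2*j) * g V (Q (2*j)) - u (Suc (2*j)) * g V (Q (Suc (2*j))))"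
    unfolding gU by (intro sum.cong refl) (simp add: g_antisym[of "Q _" V])
  also have "\<dots> = (\<Sum>n\<le>D. (g U (Q (2*n)) * g V (Q (Suc (2*n))) - g U (Q (Suc (2*n))) * g V (Q (2*n))) / rho n)"
    unfolding lessThan_Suc_atMost
  proof (intro sum.cong refl)
    fix x assume "x \<in> {..D}"
    then have x: "x \<le> D" by simp
    show "- u (2*x) * g V (Q (2*x)) - u (Suc (2*x)) * g V (Q (Suc (2*x))) =
        (g U (Q (2*x)) * g V (Q (Suc (2*x))) - g U (Q (Suc (2*x))) * g V (Q (2*x))) / rho x"
      by (simp only: c1[OF x] c2[OF x]) (simp add: field_simps rho_nz)
  qed
  finally show ?thesis .
qed

lemma gexpP:
  assumes "degree W \<le> D"
  shows "g W F = (\<Sum>i\<le>D. Bf m W (P i) / hh i * g (P i) F)"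
proof -
  have "g W F = (\<Sum>i\<le>degree W. Bf m W (P i) / hh i * g (P i) F)"
    by (subst rep_P) (simp add: g_sum1 g_smult1)
  also have "\<dots> = (\<Sum>i\<le>D. Bf m W (P i) / hh i * g (P i) F)"
    by (rule sum.mono_neutral_left) (use assms in \<open>auto simp: Bf_P_high\<close>)
  finally show ?thesis .
qed

abbreviation AA where "AA \<equiv> Acoef P"

lemma coef_odd: "g (monom 1 p * P j) (Q (Suc (2*n))) = AA p (2*n) j * rho n - AA p (Suc (Suc (2*n))) j * tau n"
proof -
  define D where "D = p + j + 2*n + 2"
  have "g (monom 1 p * P j) (Q (Suc (2*n))) = (\<Sum>i\<le>D. AA p i j * g (P i) (Q (Suc (2*n))))"
    by (subst gexpP[of _ D]) (simp_all add: deg_XP D_def Acoef_eq)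
  also have "\<dots> = (\<Sum>i\<le>D. if i = 2*n then AA p i j * rho n else 0) - (\<Sum>i\<le>D. if i = Suc (Suc (2*n)) then AA p i j * tau n else 0)"
    by (subst sum_subtractf[symmetric]) (rule sum.cong, auto simp: Q_odd gPP_odd)
  also have "\<dots> = AA p (2*n) j * rho n - AA p (Suc (Suc (2*n))) j * tau n"
  proof -
    have "2*n \<le> D" "Suc (Suc (2*n)) \<le> D" by (simp_all add: D_def)
    then show ?thesis unfolding sum.delta by simp
  qed
  finally show ?thesis .
qed

lemma coef_even: "g (monom 1 p * P j) (Q (2*n)) = - AA p (Suc (2*n)) j * rho n"
proof -
  define D where "D = p + j + 2*n + 2"
  have "g (monom 1 p * P j) (Q (2*n)) = (\<Sum>i\<le>D. AA p i j * g (P i) (Q (2*n)))"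
    by (subst gexpP[of _ D]) (simp_all add: deg_XP D_def Acoef_eq)
  also have "\<dots> = (\<Sum>i\<le>D. if i = Suc (2*n) then - AA p i j * rho n else 0)"
    by (rule sum.cong) (auto simp: gPQ_even)
  also have "\<dots> = - AA p (Suc (2*n)) j * rho n"
  proof -
    have "Suc (2*n) \<le> D" by (simp add: D_def)
    then show ?thesis unfolding sum.delta by simp
  qed
  finally show ?thesis .
qed

lemma XQ_even: "monom 1 p * Q (2*k) = (\<Sum>j\<le>k. smult (mu HH c k j) (monom 1 p * P (2*j)))"
  by (simp add: Q_even sum_distrib_left mult_smult_right)

lemma L_ee: "g (monom 1 p * Q (2*k)) (Q (Suc (2*n))) = rho n * B_ee HH c AA p n k"
  unfolding XQ_even g_sum1 g_smult1 coef_odd B_ee_def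
  by (simp add: sum_distrib_left sum_distrib_right sum_subtractf[symmetric] lam_rho[symmetric] algebra_simps)

lemma L_oe: "g (monom 1 p * Q (2*k)) (Q (2*n)) = - rho n * B_oe HH c AA p n k"
  unfolding XQ_even g_sum1 g_smult1 coef_even B_oe_def
  by (simp add: sum_distrib_left sum_distrib_right algebra_simps)

lemma L_eo: "g (monom 1 p * Q (Suc (2*k))) (Q (Suc (2*n))) = rho n * B_eo HH c AA p n k"
  unfolding Q_odd[of k] coef_odd B_eo_def
  by (simp add: lam_rho[symmetric] algebra_simps)

lemma L_oo: "g (monom 1 p * Q (Suc (2*k))) (Q (2*n)) = - rho n * B_oo AA p n k"
  unfolding Q_odd[of k] coef_even B_oo_def by simp


lemma B_oo_zero: "n + p div 2 < k \<or> k + p div 2 < n \<Longrightarrow> B_oo AA p n k = 0"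
  unfolding B_oo_def by (rule Acoef_zero) presburger

lemma B_eo_zero: "n + (p+1) div 2 < k \<or> k + (p+1) div 2 < n \<Longrightarrow> B_eo HH c AA p n k = 0"
proof -
  assume H: "n + (p+1) div 2 < k \<or> k + (p+1) div 2 < n"
  have "AA p (2*n) (2*k+1) = 0" by (rule Acoef_zero) (use H in presburger)
  moreover have "AA p (2*n+2) (2*k+1) = 0" by (rule Acoef_zero) (use H in presburger)
  ultimately show ?thesis unfolding B_eo_def by simp
qed

end


context opalg
begin

lemma sum_restrict_range:
  fixes F :: "nat \<Rightarrow> real"
  assumes "\<And>n. n + r < k \<or> k + r < n \<Longrightarrow> F n = 0" "k + r \<le> D"
  shows "(\<Sum>n\<le>D. F n) = (\<Sum>n\<in>{k - r .. k + r}. F n)"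
proof (rule sum.mono_neutral_right)
  show "\<forall>i\<in>{..D} - {k - r..k + r}. F i = 0"
  proof
    fix i assume "i \<in> {..D} - {k - r..k + r}"
    then have "i + r < k \<or> k + r < i" by auto
    then show "F i = 0" using assms(1) by blast
  qed
qed (use assms in auto)

definition Phi where
  "Phi p1 p2 k = g (monom 1 p1 * Q (2*k)) (monom 1 p2 * Q (Suc (2*k)))
               - g (monom 1 p1 * Q (Suc (2*k))) (monom 1 p2 * Q (2*k))"

lemma aux_div: "r \<noteq> 0 \<Longrightarrow> ((- r * x) * (r * y) - (r * z) * (- r * w)) / r = r * (z * w - x * y)"
  for r x y z w :: real by (simp add: field_simps)

lemma rr_sum: "rho k * (\<Sum>n\<in>R. rr HH c n / rr HH c k * X n * Y n) = (\<Sum>n\<in>R. rho n * (X n * Y n))"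
  unfolding sum_distrib_left by (rule sum.cong) (simp_all add: rr_eq rho_nz)

lemma Phi_eq: "Phi p1 p2 k = rho k * frak_m HH c AA p1 p2 k"
proof -
  define D where "D = k + p1 + p2 + 1"
  have dQ: "degree (monom 1 p * Q n) = p + n" for p n
  proof -
    have "Q n \<noteq> 0" using Q_monic[of n] by (metis leading_coeff_0_iff one_neq_zero)
    then show ?thesis using Q_monic[of n] by (simp add: degree_mult_eq degree_monom_eq)
  qed
  have d1: "degree (monom 1 p1 * Q (2*k)) < 2 * Suc D" "degree (monom 1 p1 * Q (Suc (2*k))) < 2 * Suc D"
    by (simp_all add: dQ D_def)
  define T1 where "T1 n = rho n * (B_oo AA p1 n k * B_ee HH c AA p2 n k)" for n
  define T2 where "T2 n = rho n * (B_ee HH c AA p1 n k * B_oo AA p2 n k)" for n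
  define T3 where "T3 n = rho n * (B_eo HH c AA p1 n k * B_oe HH c AA p2 n k)" for n
  define T4 where "T4 n = rho n * (B_oe HH c AA p1 n k * B_eo HH c AA p2 n k)" for n
  have e1: "g (monom 1 p1 * Q (2*k)) (monom 1 p2 * Q (Suc (2*k))) = (\<Sum>n\<le>D. T2 n - T4 n)"
    unfolding skew_parseval[OF d1(1)] L_ee L_oe L_eo L_oo
    by (rule sum.cong) (simp_all only: aux_div[OF rho_nz] T2_def T4_def right_diff_distrib)
  have e2: "g (monom 1 p1 * Q (Suc (2*k))) (monom 1 p2 * Q (2*k)) = (\<Sum>n\<le>D. T3 n - T1 n)"
    unfolding skew_parseval[OF d1(2)] L_ee L_oe L_eo L_oo
    by (rule sum.cong) (simp_all only: aux_div[OF rho_nz] T3_def T1_def right_diff_distrib)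
  have "Phi p1 p2 k = (\<Sum>n\<le>D. T1 n) + (\<Sum>n\<le>D. T2 n) - (\<Sum>n\<le>D. T3 n) - (\<Sum>n\<le>D. T4 n)"
    unfolding Phi_def e1 e2 by (simp add: sum_subtractf)
  also have "(\<Sum>n\<le>D. T1 n) = (\<Sum>n\<in>{k - p1 div 2 .. k + p1 div 2}. T1 n)"
    by (rule sum_restrict_range) (auto simp: T1_def B_oo_zero D_def)
  also have "(\<Sum>n\<le>D. T2 n) = (\<Sum>n\<in>{k - p2 div 2 .. k + p2 div 2}. T2 n)"
    by (rule sum_restrict_range) (auto simp: T2_def B_oo_zero D_def)
  also have "(\<Sum>n\<le>D. T3 n) = (\<Sum>n\<in>{k - (p1+1) div 2 .. k + (p1+1) div 2}. T3 n)"
    by (rule sum_restrict_range) (auto simp: T3_def B_eo_zero D_def)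
  also have "(\<Sum>n\<le>D. T4 n) = (\<Sum>n\<in>{k - (p2+1) div 2 .. k + (p2+1) div 2}. T4 n)"
    by (rule sum_restrict_range) (auto simp: T4_def B_eo_zero D_def)
  finally show ?thesis
    unfolding frak_m_def right_diff_distrib distrib_left rr_sum T1_def T2_def T3_def T4_def
    by (simp only: mult.commute)
qed

lemma A0: "AA 0 i j = (if i = j then 1 else 0)"
  by (simp add: Acoef_eq orth hh_nz)

lemma par_eqs: "(Suc (Suc (2*n)) = 2*j) = (j = Suc n)" "(Suc (2*n) = 2*j) = False" "(2*j = Suc (2*n)) = False"
  by presburger+

lemma B_ee0: "B_ee HH c AA 0 n k = (if n = k then 1 else 0)"
proof -
  have "B_ee HH c AA 0 n k = (if n \<le> k then mu HH c k n else 0) - lam HH c n * (if Suc n \<le> k then mu HH c k (Suc n) else 0)"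
    unfolding B_ee_def A0 by (simp add: par_eqs if_distrib[of "\<lambda>x. _ * x"] sum.delta cong: if_cong)
  also have "\<dots> = (if n = k then 1 else 0)"
  proof (cases "n < k")
    case True then show ?thesis using mu_rec[OF True] by simp
  qed (auto simp: mu_kk)
  finally show ?thesis .
qed

lemma frak_q0: "frak_m HH c AA q 0 k = AA q (Suc (2*k)) (Suc (2*k)) + B_ee HH c AA q k k"
proof -
  have s1: "(\<Sum>n\<in>{k - q div 2 .. k + q div 2}. rr HH c n / rr HH c k * B_oo AA q n k * B_ee HH c AA 0 n k)
      = AA q (Suc (2*k)) (Suc (2*k))"
    unfolding B_ee0 by (simp add: if_distrib[of "\<lambda>x. _ * x"] sum.delta rr_eq rho_nz B_oo_def cong: if_cong)
  have "B_oe HH c AA 0 n k = 0" for n unfolding B_oe_def A0 by (simp add: par_eqs)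
  moreover have "B_eo HH c AA 0 k k = 0" unfolding B_eo_def A0 by simp
  moreover have "B_oo AA 0 k k = 1" unfolding B_oo_def A0 by simp
  ultimately show ?thesis unfolding frak_m_def s1 by (simp add: rr_eq rho_nz)
qed

lemma holo_sum: "(\<Sum>k<N. frak_m HH c AA q 0 k) =
   (\<Sum>i<2*N. AA q i i) - (\<Sum>j<N. mu HH c N j * AA q (2*N) (2*j))"
proof -
  define T where "T k = (\<Sum>j\<le>k. mu HH c k j * AA q (2*k) (2*j))" for k
  have Bk: "B_ee HH c AA q k k = T k - T (Suc k) + AA q (2*Suc k) (2*Suc k)" for k
  proof -
    have "lam HH c k * (\<Sum>j\<le>k. mu HH c k j * AA q (2*k+2) (2*j)) = (\<Sum>j\<le>k. mu HH c (Suc k) j * AA q (2*Suc k) (2*j))"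
      by (simp add: sum_distrib_left mu_Suc algebra_simps)
    also have "\<dots> = T (Suc k) - AA q (2*Suc k) (2*Suc k)"
      by (simp add: T_def mu_kk)
    finally show ?thesis unfolding B_ee_def T_def[of k] by simp
  qed
  have "(\<Sum>k<N. frak_m HH c AA q 0 k) = (\<Sum>k<N. AA q (Suc (2*k)) (Suc (2*k)) + AA q (2*Suc k) (2*Suc k)) + (\<Sum>k<N. T k - T (Suc k))"
    by (simp add: frak_q0 Bk sum.distrib[symmetric] algebra_simps)
  also have "(\<Sum>k<N. T k - T (Suc k)) = T 0 - T N" by (rule sum_lessThan_telescope')
  also have "T 0 = AA q 0 0" by (simp add: T_def mu_kk)
  also have "T N = (\<Sum>j<N. mu HH c N j * AA q (2*N) (2*j)) + AA q (2*N) (2*N)"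
    by (simp add: T_def mu_kk lessThan_Suc_atMost[symmetric])
  also have "(\<Sum>k<N. AA q (Suc (2*k)) (Suc (2*k)) + AA q (2*Suc k) (2*Suc k)) =
      (\<Sum>k<N. AA q (Suc (2*k)) (Suc (2*k))) + (\<Sum>k<N. AA q (2*Suc k) (2*Suc k))"
    by (rule sum.distrib)
  also have "(\<Sum>k<N. AA q (2*Suc k) (2*Suc k)) = (\<Sum>k<Suc N. AA q (2*k) (2*k)) - AA q 0 0"
    by (subst sum.lessThan_Suc_shift) simp
  also have "(\<Sum>i<2*N. AA q i i) = (\<Sum>k<N. AA q (2*k) (2*k)) + (\<Sum>k<N. AA q (Suc (2*k)) (Suc (2*k)))"
    by (simp add: sum_even_odd sum.distrib)
  ultimately show ?thesis by simp
qed

end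


definition vdet :: "(nat \<Rightarrow> complex poly) \<Rightarrow> nat \<Rightarrow> (nat \<Rightarrow> complex) \<Rightarrow> complex" where
  "vdet F n x = (\<Sum>\<sigma>\<in>{\<sigma>. \<sigma> permutes {..<n}}. of_int (sign \<sigma>) * (\<Prod>i<n. poly (F (\<sigma> i)) (x i)))"

lemma vdet_alt:
  assumes ij: "i < n" "j < n" "i \<noteq> j" and xij: "x i = x j"
  shows "vdet F n x = 0"
proof -
  define t where "t = Transposition.transpose i j"
  have tp: "t permutes {..<n}" unfolding t_def by (rule permutes_swap_id) (use ij in auto)
  define f where "f \<sigma> = of_int (sign \<sigma>) * (\<Prod>l<n. poly (F (\<sigma> l)) (x l))" for \<sigma>
  have "vdet F n x = (\<Sum>\<sigma>\<in>{\<sigma>. \<sigma> permutes {..<n}}. f (\<sigma> \<circ> t))"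
    unfolding vdet_def f_def[symmetric] by (rule sum_permutations_compose_right[OF tp])
  also have "\<dots> = (\<Sum>\<sigma>\<in>{\<sigma>. \<sigma> permutes {..<n}}. - f \<sigma>)"
  proof (rule sum.cong[OF refl])
    fix \<sigma> assume "\<sigma> \<in> {\<sigma>. \<sigma> permutes {..<n}}"
    then have \<sigma>: "\<sigma> permutes {..<n}" by simp
    have sg: "sign (\<sigma> \<circ> t) = - sign \<sigma>"
      using sign_compose[OF permutes_imp_permutation[OF _ \<sigma>] permutes_imp_permutation[OF _ tp]]
        sign_swap_id[of i j] ij by (simp add: t_def)
    have tt: "t (t l) = l" for l by (simp add: t_def)
    have xt: "x (t l) = x l" for l using xij by (cases "l = i"; cases "l = j") (simp_all add: t_def)
    have "(\<Prod>l<n. poly (F ((\<sigma> \<circ> t) l)) (x l)) = (\<Prod>l<n. poly (F (\<sigma> (t l))) (x (t (t l))))"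
      by (simp add: tt)
    also have "\<dots> = (\<Prod>l<n. poly (F (\<sigma> l)) (x (t l)))"
      by (rule prod.reindex_bij_betw[OF permutes_imp_bij[OF tp], where g = "\<lambda>l. poly (F (\<sigma> l)) (x (t l))"])
    also have "\<dots> = (\<Prod>l<n. poly (F (\<sigma> l)) (x l))" by (simp add: xt)
    finally show "f (\<sigma> \<circ> t) = - f \<sigma>" unfolding f_def sg by simp
  qed
  finally have "vdet F n x = - vdet F n x"
    by (simp add: sum_negf vdet_def f_def)
  then show ?thesis by simp
qed

definition pv :: "(nat \<Rightarrow> complex poly) \<Rightarrow> nat \<Rightarrow> (nat \<Rightarrow> complex) \<Rightarrow> complex poly" where
  "pv F n x = (\<Sum>\<sigma>\<in>{\<sigma>. \<sigma> permutes {..<Suc n}}.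
      smult (of_int (sign \<sigma>) * (\<Prod>i<n. poly (F (\<sigma> i)) (x i))) (F (\<sigma> n)))"

lemma vdet_Suc_pv: "vdet F (Suc n) (x(n := t)) = poly (pv F n x) t"
  unfolding vdet_def pv_def poly_sum
  by (intro sum.cong refl) (simp add: algebra_simps)

lemma vdet_Suc_pv': "vdet F (Suc n) x = poly (pv F n x) (x n)"
  using vdet_Suc_pv[of F n x "x n"] by simp

lemma perms_Suc_fix: "{\<sigma>. \<sigma> permutes {..<Suc n} \<and> \<sigma> n = n} = {\<sigma>. \<sigma> permutes {..<n}}"
proof (intro set_eqI iffI; simp)
  fix \<sigma> assume H: "\<sigma> permutes {..<Suc n} \<and> \<sigma> n = n"
  show "\<sigma> permutes {..<n}" by (rule permutes_superset[OF H[THEN conjunct1]]) (use H in auto)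
next
  fix \<sigma> assume H: "\<sigma> permutes {..<n}"
  show "\<sigma> permutes {..<Suc n} \<and> \<sigma> n = n"
    using permutes_subset[OF H, of "{..<Suc n}"] permutes_not_in[OF H, of n] by auto
qed

lemma pv_props:
  assumes monic: "\<And>k. degree (F k) = k \<and> lead_coeff (F k) = 1"
  shows "degree (pv F n x) \<le> n" "coeff (pv F n x) n = vdet F n x"
proof -
  have sn: "\<sigma> n \<le> n" if "\<sigma> permutes {..<Suc n}" for \<sigma>
    using permutes_in_image[OF that, of n] by auto
  show "degree (pv F n x) \<le> n"
    unfolding pv_def
    by (rule degree_sum_le) (auto intro!: order.trans[OF degree_smult_le] simp: monic sn finite_permutations)
  have cf: "coeff (F (\<sigma> n)) n = (if \<sigma> n = n then 1 else 0)" if "\<sigma> permutes {..<Suc n}" for \<sigma>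
  proof (cases "\<sigma> n = n")
    case True then show ?thesis using monic[of n] by (metis)
  next
    case False
    then have "\<sigma> n < n" using sn[OF that] by simp
    then show ?thesis using monic[of "\<sigma> n"] False by (simp add: coeff_eq_0)
  qed
  have "coeff (pv F n x) n = (\<Sum>\<sigma>\<in>{\<sigma>. \<sigma> permutes {..<Suc n}}.
      if \<sigma> n = n then of_int (sign \<sigma>) * (\<Prod>i<n. poly (F (\<sigma> i)) (x i)) else 0)"
    unfolding pv_def coeff_sum by (intro sum.cong refl) (simp add: cf)
  also have "\<dots> = (\<Sum>\<sigma>\<in>{\<sigma>. \<sigma> permutes {..<Suc n} \<and> \<sigma> n = n}. of_int (sign \<sigma>) * (\<Prod>i<n. poly (F (\<sigma> i)) (x i)))"
  proof -
    have fin: "finite {\<sigma>. \<sigma> permutes {..<Suc n}}" by (rule finite_permutations) simp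
    show ?thesis by (subst sum.inter_filter[symmetric]) (use fin in \<open>auto simp: Collect_conj_eq[symmetric]\<close>)
  qed
  also have "\<dots> = vdet F n x" unfolding perms_Suc_fix vdet_def ..
  finally show "coeff (pv F n x) n = vdet F n x" .
qed

lemma prod_pairs_Suc:
  "(\<Prod>j<Suc n. \<Prod>k\<in>{j<..<Suc n}. f j k) = (\<Prod>j<n. \<Prod>k\<in>{j<..<n}. f j k) * (\<Prod>j<n. f j n)"
proof -
  have "(\<Prod>j<Suc n. \<Prod>k\<in>{j<..<Suc n}. f j k) = (\<Prod>j<n. \<Prod>k\<in>{j<..<Suc n}. f j k)"
  proof -
    have "{n<..<Suc n} = {}" by auto
    then show ?thesis by simp
  qed
  also have "\<dots> = (\<Prod>j<n. (\<Prod>k\<in>{j<..<n}. f j k) * f j n)"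
  proof (intro prod.cong refl)
    fix j assume "j \<in> {..<n}"
    then have "{j<..<Suc n} = insert n {j<..<n}" by auto
    then show "(\<Prod>k\<in>{j<..<Suc n}. f j k) = (\<Prod>k\<in>{j<..<n}. f j k) * f j n" by (simp add: mult.commute)
  qed
  also have "\<dots> = (\<Prod>j<n. \<Prod>k\<in>{j<..<n}. f j k) * (\<Prod>j<n. f j n)" by (rule prod.distrib)
  finally show ?thesis .
qed

lemma vandermonde:
  assumes monic: "\<And>k. degree (F k) = k \<and> lead_coeff (F k) = 1"
  shows "vdet F n x = (\<Prod>j<n. \<Prod>k\<in>{j<..<n}. (x k - x j))"
proof (induction n arbitrary: x)
  case 0
  have "{\<sigma>. \<sigma> permutes ({}::nat set)} = {id}" by (auto simp: permutes_empty)
  then show ?case by (simp add: vdet_def)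
next
  case (Suc n)
  show ?case
  proof (cases "inj_on x {..<n}")
    case True
    define L where "L = (\<Prod>i<n. [:- x i, 1:])"
    have Lm: "degree L = n" "coeff L n = 1"
    proof -
      have "lead_coeff L = 1" unfolding L_def lead_coeff_prod by simp
      moreover show "degree L = n" unfolding L_def by (subst degree_prod_eq_sum_degree) auto
      ultimately show "coeff L n = 1" by simp
    qed
    have pvL: "pv F n x = smult (vdet F n x) L"
    proof (rule poly_eqI_degree_lead_coeff[where n = n and A = "x ` {..<n}"])
      show "coeff (pv F n x) n = coeff (smult (vdet F n x) L) n" using pv_props(2)[OF monic] Lm by simp
      show "n \<le> card (x ` {..<n})" using card_image[OF True] by simp
      show "degree (pv F n x) \<le> n" by (rule pv_props(1)[OF monic])
      show "degree (smult (vdet F n x) L) \<le> n" using Lm degree_smult_le by (metis)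
    next
      fix z assume "z \<in> x ` {..<n}"
      then obtain i where i: "i < n" "z = x i" by auto
      have "poly (pv F n x) z = vdet F (Suc n) (x(n := x i))" using vdet_Suc_pv by (simp add: i)
      also have "\<dots> = 0" by (rule vdet_alt[of i _ n]) (use i in auto)
      moreover have "poly (smult (vdet F n x) L) z = 0"
        unfolding L_def using i by (auto simp: poly_prod)
      ultimately show "poly (pv F n x) z = poly (smult (vdet F n x) L) z" by simp
    qed
    have "vdet F (Suc n) x = vdet F n x * (\<Prod>i<n. x n - x i)"
      unfolding vdet_Suc_pv' pvL L_def by (simp add: poly_prod)
    then show ?thesis unfolding prod_pairs_Suc Suc.IH by simp
  next
    case False
    then obtain i j where ij: "i < n" "j < n" "i \<noteq> j" "x i = x j" by (auto simp: inj_on_def)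
    have "vdet F (Suc n) x = 0" by (rule vdet_alt[OF _ _ ij(3,4)]) (use ij in auto)
    moreover have "(\<Prod>j<Suc n. \<Prod>k\<in>{j<..<Suc n}. (x k - x j)) = 0"
    proof -
      define a b where "a = min i j" and "b = max i j"
      have ab: "a < b" "b < Suc n" "x a = x b" using ij by (auto simp: a_def b_def min_def max_def)
      have "(\<Prod>k\<in>{a<..<Suc n}. (x k - x a)) = 0"
        by (rule prod_zero) (use ab in auto)
      moreover have "a \<in> {..<Suc n}" using ab by simp
      ultimately show ?thesis by (intro prod_zero) auto
    qed
    ultimately show ?thesis by simp
  qed
qed



abbreviation perms :: "nat \<Rightarrow> (nat \<Rightarrow> nat) set" where
  "perms n \<equiv> {\<sigma>. \<sigma> permutes {..<n}}"

lemma perm_eq_off_one: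
  assumes \<sigma>: "\<sigma> permutes S" and \<tau>: "\<tau> permutes S" and eq: "\<And>j. j \<in> S \<Longrightarrow> j \<noteq> m \<Longrightarrow> \<sigma> j = \<tau> j"
  shows "\<sigma> = \<tau>"
proof
  fix j show "\<sigma> j = \<tau> j"
  proof (cases "j \<in> S")
    case False then show ?thesis using permutes_not_in[OF \<sigma>] permutes_not_in[OF \<tau>] by simp
  next
    case True
    show ?thesis
    proof (cases "j = m")
      case False then show ?thesis using eq True by simp
    next
      case jm: True
      have "\<sigma> j \<in> S" using True permutes_in_image[OF \<sigma>] by simp
      then obtain j' where j': "j' \<in> S" "\<tau> j' = \<sigma> j" using permutes_image[OF \<tau>] by (metis imageE)
      show ?thesis
      proof (cases "j' = m")
        case True then show ?thesis using j' jm by simp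
      next
        case False
        then have "\<sigma> j' = \<sigma> j" using eq[OF j'(1)] j' by simp
        then have "j' = j" using permutes_inj[OF \<sigma>] by (simp add: inj_eq)
        then show ?thesis using False jm by simp
      qed
    qed
  qed
qed

lemma complex_comb:
  fixes M :: "nat \<Rightarrow> nat \<Rightarrow> nat \<Rightarrow> 'a::comm_ring_1"
  assumes supp: "\<And>j a b. j < N \<Longrightarrow> j \<noteq> m \<Longrightarrow> a \<noteq> b \<Longrightarrow> M j a b = 0"
  shows "(\<Sum>\<sigma>\<in>perms N. \<Sum>\<tau>\<in>perms N. of_int (sign \<sigma>) * of_int (sign \<tau>) * (\<Prod>j<N. M j (\<sigma> j) (\<tau> j)))
       = (\<Sum>\<sigma>\<in>perms N. \<Prod>j<N. M j (\<sigma> j) (\<sigma> j))"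
proof (rule sum.cong[OF refl])
  fix \<sigma> assume "\<sigma> \<in> perms N"
  then have \<sigma>: "\<sigma> permutes {..<N}" by simp
  have fin: "finite (perms N)" by (rule finite_permutations) simp
  have z: "of_int (sign \<sigma>) * of_int (sign \<tau>) * (\<Prod>j<N. M j (\<sigma> j) (\<tau> j)) = 0"
    if "\<tau> \<in> perms N - {\<sigma>}" for \<tau>
  proof -
    from that have \<tau>: "\<tau> permutes {..<N}" and ne: "\<tau> \<noteq> \<sigma>" by auto
    have "\<exists>j\<in>{..<N}. j \<noteq> m \<and> \<sigma> j \<noteq> \<tau> j"
      using perm_eq_off_one[OF \<sigma> \<tau>] ne by blast
    then obtain j where "j < N" "j \<noteq> m" "\<sigma> j \<noteq> \<tau> j" by auto
    then have "(\<Prod>j<N. M j (\<sigma> j) (\<tau> j)) = 0" by (intro prod_zero) (auto intro!: bexI[of _ j] supp)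
    then show ?thesis by simp
  qed
  have "(\<Sum>\<tau>\<in>perms N. of_int (sign \<sigma>) * of_int (sign \<tau>) * (\<Prod>j<N. M j (\<sigma> j) (\<tau> j)))
      = of_int (sign \<sigma>) * of_int (sign \<sigma>) * (\<Prod>j<N. M j (\<sigma> j) (\<sigma> j))"
    using \<sigma> by (subst sum.remove[OF fin, of \<sigma>]) (auto simp: sum.neutral z)
  also have "\<dots> = (\<Prod>j<N. M j (\<sigma> j) (\<sigma> j))"
    by (simp flip: of_int_mult)
  finally show "(\<Sum>\<tau>\<in>perms N. of_int (sign \<sigma>) * of_int (sign \<tau>) * (\<Prod>j<N. M j (\<sigma> j) (\<tau> j))) = (\<Prod>j<N. M j (\<sigma> j) (\<sigma> j))" .
qed

lemma final_comb:
  fixes F h :: "nat \<Rightarrow> 'a::field"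
  assumes h: "\<And>k. k < N \<Longrightarrow> h k \<noteq> 0"
  shows "(\<Sum>\<sigma>\<in>perms N. \<Prod>j<N. h (\<sigma> j)) = of_nat (fact N) * (\<Prod>k<N. h k)"
    and "(\<Sum>m<N. \<Sum>\<sigma>\<in>perms N. \<Prod>j<N. (if j = m then F (\<sigma> j) else h (\<sigma> j)))
         = of_nat (fact N) * (\<Prod>k<N. h k) * (\<Sum>k<N. F k / h k)"
proof -
  have cp: "card (perms N) = fact N" by (rule card_permutations) simp_all
  have ph: "(\<Prod>j<N. h (\<sigma> j)) = (\<Prod>k<N. h k)" if "\<sigma> permutes {..<N}" for \<sigma>
    by (rule prod.reindex_bij_betw[OF permutes_imp_bij[OF that]])
  show "(\<Sum>\<sigma>\<in>perms N. \<Prod>j<N. h (\<sigma> j)) = of_nat (fact N) * (\<Prod>k<N. h k)"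
    by (simp add: ph cp)
  have one: "(\<Prod>j<N. (if j = m then F (\<sigma> j) else h (\<sigma> j))) = (\<Prod>k<N. h k) * (F (\<sigma> m) / h (\<sigma> m))"
    if \<sigma>: "\<sigma> permutes {..<N}" and m: "m < N" for \<sigma> m
  proof -
    have hm: "h (\<sigma> m) \<noteq> 0" using h permutes_in_image[OF \<sigma>] m by simp
    have "(\<Prod>j<N. (if j = m then F (\<sigma> j) else h (\<sigma> j))) = F (\<sigma> m) * (\<Prod>j\<in>{..<N} - {m}. h (\<sigma> j))"
      using m by (subst prod.remove[of _ m]) (auto intro!: prod.cong)
    moreover have "(\<Prod>j<N. h (\<sigma> j)) = h (\<sigma> m) * (\<Prod>j\<in>{..<N} - {m}. h (\<sigma> j))"
      using m by (subst prod.remove[of _ m]) auto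
    ultimately show ?thesis using ph[OF \<sigma>] hm by (simp add: field_simps)
  qed
  have sh: "(\<Sum>m<N. F (\<sigma> m) / h (\<sigma> m)) = (\<Sum>k<N. F k / h k)" if "\<sigma> permutes {..<N}" for \<sigma>
    by (rule sum.reindex_bij_betw[OF permutes_imp_bij[OF that], where g = "\<lambda>k. F k / h k"])
  have "(\<Sum>m<N. \<Sum>\<sigma>\<in>perms N. \<Prod>j<N. (if j = m then F (\<sigma> j) else h (\<sigma> j)))
      = (\<Sum>\<sigma>\<in>perms N. \<Sum>m<N. (\<Prod>k<N. h k) * (F (\<sigma> m) / h (\<sigma> m)))"
    by (subst sum.swap) (auto intro!: sum.cong simp: one)
  also have "\<dots> = (\<Sum>\<sigma>\<in>perms N. (\<Prod>k<N. h k) * (\<Sum>k<N. F k / h k))"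
  proof (intro sum.cong refl)
    fix \<sigma> assume "\<sigma> \<in> perms N"
    then show "(\<Sum>m<N. (\<Prod>k<N. h k) * (F (\<sigma> m) / h (\<sigma> m))) = (\<Prod>k<N. h k) * (\<Sum>k<N. F k / h k)"
      unfolding sum_distrib_left[symmetric] using sh by simp
  qed
  also have "\<dots> = of_nat (fact N) * (\<Prod>k<N. h k) * (\<Sum>k<N. F k / h k)"
    by (simp add: cp)
  finally show "(\<Sum>m<N. \<Sum>\<sigma>\<in>perms N. \<Prod>j<N. (if j = m then F (\<sigma> j) else h (\<sigma> j)))
         = of_nat (fact N) * (\<Prod>k<N. h k) * (\<Sum>k<N. F k / h k)" .
qed



lemma block_lemma: "x div 2 = b \<Longrightarrow> y div 2 = b \<Longrightarrow> z div 2 = b \<Longrightarrow> x \<noteq> y \<Longrightarrow> z = x \<or> z = y"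
  for x y z b :: nat by presburger

lemma div2_lt: "(x::nat) < 2*N \<Longrightarrow> x div 2 < N" by presburger

lemma halfsplit: "(x::nat) = 2*(x div 2) + (if odd x then 1 else 0)"
  by (cases "odd x") (simp_all add: odd_two_times_div_two_succ)

lemma pair_other: fixes x y :: nat assumes "x div 2 = y div 2" "x \<noteq> y"
  shows "y = 2*(x div 2) + (if odd x then 0 else 1)"
proof -
  have y: "y = 2*(y div 2) + (if odd y then 1 else 0)" by (rule halfsplit)
  have x: "x = 2*(x div 2) + (if odd x then 1 else 0)" by (rule halfsplit)
  have "odd x \<noteq> odd y" using x y assms by (metis)
  then show ?thesis using y assms(1) by (cases "odd x") auto
qed

lemma two_mod_eq: "2*x + r = 2*y + s \<Longrightarrow> r < 2 \<Longrightarrow> s < 2 \<Longrightarrow> x = y \<and> r = s"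
  for x y r s :: nat by presburger

definition sigPE :: "nat \<Rightarrow> (nat \<Rightarrow> nat) \<Rightarrow> nat set \<Rightarrow> nat \<Rightarrow> nat" where
  "sigPE N \<pi> E a = (if a < 2*N then 2 * \<pi> (a div 2) + (if a div 2 \<in> E then 1 - a mod 2 else a mod 2) else a)"

definition PP :: "nat \<Rightarrow> (nat \<Rightarrow> nat) set" where
  "PP N = {\<sigma>. \<sigma> permutes {..<2*N} \<and> (\<forall>j<N. \<sigma> (2*j) div 2 = \<sigma> (Suc (2*j)) div 2)}"

lemma sigPE_even: "j < N \<Longrightarrow> sigPE N \<pi> E (2*j) = 2 * \<pi> j + (if j \<in> E then 1 else 0)"
  by (simp add: sigPE_def)

lemma sigPE_odd: "j < N \<Longrightarrow> sigPE N \<pi> E (Suc (2*j)) = 2 * \<pi> j + (if j \<in> E then 0 else 1)"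
  by (simp add: sigPE_def)

lemma sigPE_perm:
  assumes \<pi>: "\<pi> permutes {..<N}"
  shows "sigPE N \<pi> E permutes {..<2*N}"
proof (rule inj_imp_permutes)
  define r where "r a = (if a div 2 \<in> E then 1 - a mod 2 else a mod 2)" for a :: nat
  have r2: "r a < 2" for a by (simp add: r_def; linarith)
  have s: "a < 2*N \<Longrightarrow> sigPE N \<pi> E a = 2 * \<pi> (a div 2) + r a" for a by (simp add: sigPE_def r_def)
  show "inj_on (sigPE N \<pi> E) {..<2*N}"
  proof (rule inj_onI)
    fix a a' assume a: "a \<in> {..<2*N}" "a' \<in> {..<2*N}" and eq: "sigPE N \<pi> E a = sigPE N \<pi> E a'"
    from eq a have "2 * \<pi> (a div 2) + r a = 2 * \<pi> (a' div 2) + r a'" by (simp add: s)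
    from two_mod_eq[OF this r2 r2] have e1: "\<pi> (a div 2) = \<pi> (a' div 2)" and e2: "r a = r a'" by auto
    from e1 have d: "a div 2 = a' div 2" using permutes_inj[OF \<pi>] by (simp add: inj_eq)
    with e2 have "a mod 2 = a' mod 2" unfolding r_def by (auto split: if_splits)
    with d show "a = a'" by (metis div_mult_mod_eq)
  qed
  show "sigPE N \<pi> E x \<in> {..<2*N}" if "x \<in> {..<2*N}" for x
  proof -
    have "x div 2 < N" using that by auto
    then have "\<pi> (x div 2) < N" using permutes_in_image[OF \<pi>] by simp
    then show ?thesis using that s r2[of x] by simp
  qed
  show "sigPE N \<pi> E i = i" if "i \<notin> {..<2*N}" for i using that by (simp add: sigPE_def)
qed simp

lemma sigPE_PP: "\<pi> permutes {..<N} \<Longrightarrow> sigPE N \<pi> E \<in> PP N"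
  unfolding PP_def using sigPE_perm by (auto simp: sigPE_even sigPE_odd)

lemma sigPE_inj: "inj_on (\<lambda>(\<pi>, E). sigPE N \<pi> E) (perms N \<times> Pow {..<N})"
proof (rule inj_onI, clarsimp)
  fix \<pi> E \<pi>' E' assume \<pi>: "\<pi> permutes {..<N}" and \<pi>': "\<pi>' permutes {..<N}"
    and E: "E \<subseteq> {..<N}" and E': "E' \<subseteq> {..<N}" and eq: "sigPE N \<pi> E = sigPE N \<pi>' E'"
  have j: "\<pi> j = \<pi>' j \<and> (j \<in> E \<longleftrightarrow> j \<in> E')" if "j < N" for j
  proof -
    have "2 * \<pi> j + (if j \<in> E then 1 else 0) = 2 * \<pi>' j + (if j \<in> E' then 1 else 0)"
      using fun_cong[OF eq, of "2*j"] that by (simp add: sigPE_even)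
    from two_mod_eq[OF this] show ?thesis by (cases "j \<in> E"; cases "j \<in> E'") auto
  qed
  show "\<pi> = \<pi>' \<and> E = E'"
  proof
    show "\<pi> = \<pi>'"
    proof
      fix j show "\<pi> j = \<pi>' j"
        using j[of j] permutes_not_in[OF \<pi>, of j] permutes_not_in[OF \<pi>', of j] by (cases "j < N") auto
    qed
    show "E = E'" using j E E' by blast
  qed
qed

lemma sigPE_image: "(\<lambda>(\<pi>, E). sigPE N \<pi> E) ` (perms N \<times> Pow {..<N}) = PP N"
proof
  show "(\<lambda>(\<pi>, E). sigPE N \<pi> E) ` (perms N \<times> Pow {..<N}) \<subseteq> PP N"
    using sigPE_PP by auto
  show "PP N \<subseteq> (\<lambda>(\<pi>, E). sigPE N \<pi> E) ` (perms N \<times> Pow {..<N})"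
  proof
    fix \<sigma> assume "\<sigma> \<in> PP N"
    then have \<sigma>: "\<sigma> permutes {..<2*N}" and mt: "\<And>j. j < N \<Longrightarrow> \<sigma> (2*j) div 2 = \<sigma> (Suc (2*j)) div 2"
      by (auto simp: PP_def)
    define \<pi> where "\<pi> j = (if j < N then \<sigma> (2*j) div 2 else j)" for j
    define E where "E = {j. j < N \<and> odd (\<sigma> (2*j))}"
    have ne: "\<sigma> (2*j) \<noteq> \<sigma> (Suc (2*j))" for j using permutes_inj[OF \<sigma>] by (simp add: inj_eq)
    have \<pi>p: "\<pi> permutes {..<N}"
    proof (rule inj_imp_permutes)
      show "inj_on \<pi> {..<N}"
      proof (rule inj_onI)
        fix j k assume jk: "j \<in> {..<N}" "k \<in> {..<N}" "\<pi> j = \<pi> k"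
        then have "\<sigma> (2*k) = \<sigma> (2*j) \<or> \<sigma> (2*k) = \<sigma> (Suc (2*j))"
          using block_lemma[OF refl mt[of j, symmetric] _ ne[of j], of "\<sigma> (2*k)"] by (simp add: \<pi>_def)
        then have "2*k = 2*j \<or> 2*k = Suc (2*j)" using permutes_inj[OF \<sigma>] by (auto simp: inj_eq)
        then show "j = k" by presburger
      qed
      show "\<pi> x \<in> {..<N}" if "x \<in> {..<N}" for x
        using that permutes_in_image[OF \<sigma>, of "2*x"] by (auto simp: \<pi>_def)
    qed (auto simp: \<pi>_def)
    have "\<sigma> = sigPE N \<pi> E"
    proof
      fix a show "\<sigma> a = sigPE N \<pi> E a"
      proof (cases "a < 2*N")
        case False then show ?thesis using permutes_not_in[OF \<sigma>, of a] by (simp add: sigPE_def)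
      next
        case True
        define j where "j = a div 2"
        have jN: "j < N" using True by (simp add: j_def)
        have "a = 2*j \<or> a = Suc (2*j)" unfolding j_def by presburger
        then consider "a = 2*j" | "a = Suc (2*j)" by blast
        then show ?thesis
        proof cases
          case 1
          have e: "sigPE N \<pi> E (2*j) = 2 * (\<sigma> (2*j) div 2) + (if odd (\<sigma> (2*j)) then 1 else 0)"
            using jN by (simp add: sigPE_even \<pi>_def E_def)
          show ?thesis unfolding 1 e by (rule halfsplit)
        next
          case 2
          have x: "\<sigma> (Suc (2*j)) = 2 * (\<sigma> (2*j) div 2) + (if odd (\<sigma> (2*j)) then 0 else 1)"
            by (rule pair_other[OF mt[OF jN] ne[of j]])
          show ?thesis using 2 jN x by (simp add: sigPE_odd \<pi>_def E_def)
        qed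
      qed
    qed
    moreover have "E \<subseteq> {..<N}" by (auto simp: E_def)
    ultimately show "\<sigma> \<in> (\<lambda>(\<pi>, E). sigPE N \<pi> E) ` (perms N \<times> Pow {..<N})"
      using \<pi>p by (auto intro!: image_eqI[of _ _ "(\<pi>, E)"])
  qed
qed

lemma sign_sigPE_id:
  assumes "E \<subseteq> {..<N}"
  shows "sign (sigPE N id E) = (-1) ^ card E"
proof -
  have "finite E" using assms finite_subset by blast
  then show ?thesis using assms
  proof (induction E rule: finite_induct)
    case empty
    have e: "sigPE N id {} = id" by (auto simp: sigPE_def)
    show ?case by (simp only: e sign_id) simp
  next
    case (insert j E)
    define t where "t = Transposition.transpose (2*j) (Suc (2*j))"
    have jN: "j < N" using insert by auto
    have eq: "sigPE N id (insert j E) = sigPE N id E \<circ> t"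
    proof
      fix a show "sigPE N id (insert j E) a = (sigPE N id E \<circ> t) a"
      proof (cases "a = 2*j \<or> a = Suc (2*j)")
        case True
        then show ?thesis using jN insert(2) by (auto simp: t_def sigPE_def)
      next
        case False
        then have "t a = a" by (simp add: t_def)
        moreover have "a div 2 \<noteq> j" using False by presburger
        ultimately show ?thesis by (simp add: sigPE_def)
      qed
    qed
    have p1: "permutation (sigPE N id E)"
      by (rule permutes_imp_permutation[OF _ sigPE_perm]) (simp_all add: permutes_id)
    have p2: "permutation t" unfolding t_def by (rule permutation_swap_id)
    have ih: "sign (sigPE N id E) = (-1) ^ card E" using insert.prems by (intro insert.IH) auto
    have st: "sign t = -1" by (simp add: t_def sign_swap_id)
    have "sign (sigPE N id (insert j E)) = sign (sigPE N id E) * sign t"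
      unfolding eq by (rule sign_compose[OF p1 p2])
    also have "\<dots> = (-1) ^ card E * (-1)" by (simp only: ih st)
    also have "\<dots> = (-1) ^ card (insert j E)" using insert(1,2) by simp
    finally show ?case .
  qed
qed

lemma dtrans:
  assumes r2: "r < (2::nat)"
  shows "Transposition.transpose (2*a) (2*b) (Transposition.transpose (Suc (2*a)) (Suc (2*b)) (2*c + r))
       = 2 * Transposition.transpose a b c + r"
proof -
  have e: "(2*c + r = Suc (2*a)) \<longleftrightarrow> (c = a \<and> r = 1)" "(2*c + r = Suc (2*b)) \<longleftrightarrow> (c = b \<and> r = 1)"
    "(2*c + r = 2*a) \<longleftrightarrow> (c = a \<and> r = 0)" "(2*c + r = 2*b) \<longleftrightarrow> (c = b \<and> r = 0)"
    "(Suc (2*b) = 2*a) = False" "(Suc (2*a) = 2*b) = False" "(Suc (2*a) = 2*a) = False" "(Suc (2*b) = 2*b) = False"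
    using r2 by presburger+
  have r01: "r = 0 \<or> r = 1" using r2 by auto
  show ?thesis
    unfolding transpose_def e using r01 by (cases "c = a"; cases "c = b") auto
qed

lemma sign_sigPE_empty:
  assumes "\<pi> permutes {..<N}"
  shows "sign (sigPE N \<pi> {}) = 1"
  using assms finite_lessThan[of N]
proof (induction rule: permutes_induct)
  case id
  have e: "sigPE N id {} = id" by (auto simp: sigPE_def)
  show ?case by (simp only: e sign_id)
next
  case (swap a b p)
  define T where "T = Transposition.transpose (2*a) (2*b) \<circ> Transposition.transpose (Suc (2*a)) (Suc (2*b))"
  have ab: "a < N" "b < N" "a \<noteq> b" using swap by auto
  have eq: "sigPE N (Transposition.transpose a b \<circ> p) {} = T \<circ> sigPE N p {}"
  proof
    fix x show "sigPE N (Transposition.transpose a b \<circ> p) {} x = (T \<circ> sigPE N p {}) x"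
    proof (cases "x < 2*N")
      case False
      then have "x \<noteq> 2*a" "x \<noteq> 2*b" "x \<noteq> Suc (2*a)" "x \<noteq> Suc (2*b)" using ab by auto
      then show ?thesis using False by (simp add: sigPE_def T_def)
    next
      case True
      define c where "c = p (x div 2)"
      define r where "r = x mod 2"
      have r2: "r < 2" by (simp add: r_def)
      have "sigPE N p {} x = 2 * c + r" using True by (simp add: sigPE_def c_def r_def)
      moreover have "sigPE N (Transposition.transpose a b \<circ> p) {} x = 2 * Transposition.transpose a b c + r"
        using True by (simp add: sigPE_def c_def r_def)
      ultimately show ?thesis by (simp add: T_def dtrans[OF r2])
    qed
  qed
  have pT1: "permutation (Transposition.transpose (2*a) (2*b))" by (rule permutation_swap_id)
  have pT2: "permutation (Transposition.transpose (Suc (2*a)) (Suc (2*b)))" by (rule permutation_swap_id)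
  have sT: "sign T = 1"
    unfolding T_def using ab by (simp add: sign_compose[OF pT1 pT2] sign_swap_id)
  have pT: "permutation T" unfolding T_def by (rule permutation_compose[OF pT1 pT2])
  have pS: "permutation (sigPE N p {})" by (rule permutes_imp_permutation[OF _ sigPE_perm[OF swap(4)]]) simp
  show ?case unfolding eq sign_compose[OF pT pS] sT using swap by simp
qed

lemma sign_sigPE:
  assumes \<pi>: "\<pi> permutes {..<N}" and E: "E \<subseteq> {..<N}"
  shows "sign (sigPE N \<pi> E) = (-1) ^ card E"
proof -
  have eq: "sigPE N \<pi> E = sigPE N \<pi> {} \<circ> sigPE N id E"
  proof
    fix a show "sigPE N \<pi> E a = (sigPE N \<pi> {} \<circ> sigPE N id E) a"
    proof (cases "a < 2*N")
      case False then show ?thesis by (simp add: sigPE_def)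
    next
      case True
      define r where "r = (if a div 2 \<in> E then 1 - a mod 2 else a mod 2)"
      have r2: "r < 2" by (simp add: r_def; linarith)
      have i: "sigPE N id E a = 2 * (a div 2) + r" using True by (simp add: sigPE_def r_def)
      have "2 * (a div 2) + r < 2 * N" using True r2 by presburger
      moreover have "(2 * (a div 2) + r) div 2 = a div 2" "(2 * (a div 2) + r) mod 2 = r" using r2 by simp_all
      ultimately show ?thesis using True by (simp add: i sigPE_def r_def)
    qed
  qed
  have p1: "permutation (sigPE N \<pi> {})" by (rule permutes_imp_permutation[OF _ sigPE_perm[OF \<pi>]]) simp
  have p2: "permutation (sigPE N id E)" by (rule permutes_imp_permutation[OF _ sigPE_perm]) (simp_all add: permutes_id)
  show ?thesis unfolding eq sign_compose[OF p1 p2] sign_sigPE_empty[OF \<pi>] sign_sigPE_id[OF E] by simp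
qed

lemma unmatched:
  assumes \<sigma>: "\<sigma> permutes {..<2*N}"
    and mt: "\<And>j. j < N \<Longrightarrow> j \<noteq> m \<Longrightarrow> \<sigma> (2*j) div 2 = \<sigma> (Suc (2*j)) div 2"
    and jN: "j < N"
  shows "\<sigma> (2*j) div 2 = \<sigma> (Suc (2*j)) div 2"
proof (cases "j = m")
  case False then show ?thesis using mt jN by simp
next
  case True
  have ne: "\<sigma> a \<noteq> \<sigma> a'" if "a \<noteq> a'" for a a' using permutes_inj[OF \<sigma>] that by (simp add: inj_eq)
  define S' where "S' = {..<N} - {m}"
  define f where "f k = \<sigma> (2*k) div 2" for k
  have inblock: "k = k'" if "k \<in> S'" "k' < N" "\<sigma> (2*k') div 2 = f k \<or> \<sigma> (Suc (2*k')) div 2 = f k" for k k'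
  proof -
    have kN: "k < N" "k \<noteq> m" using that by (auto simp: S'_def)
    have "\<sigma> c = \<sigma> (2*k) \<or> \<sigma> c = \<sigma> (Suc (2*k))" if "\<sigma> c div 2 = f k" for c
      using block_lemma[OF refl mt[OF kN, symmetric] _ ne, of "\<sigma> c"] that by (simp add: f_def)
    then have "\<sigma> (2*k') = \<sigma> (2*k) \<or> \<sigma> (2*k') = \<sigma> (Suc (2*k)) \<or> \<sigma> (Suc (2*k')) = \<sigma> (2*k) \<or> \<sigma> (Suc (2*k')) = \<sigma> (Suc (2*k))"
      using that(3) by blast
    then have "2*k' = 2*k \<or> 2*k' = Suc (2*k) \<or> Suc (2*k') = 2*k \<or> Suc (2*k') = Suc (2*k)"
      using permutes_inj[OF \<sigma>] by (auto simp: inj_eq)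
    then show "k = k'" by presburger
  qed
  have inj: "inj_on f S'"
  proof (rule inj_onI)
    fix x y assume "x \<in> S'" "y \<in> S'" "f x = f y"
    then show "x = y" using inblock[of x y] by (auto simp: S'_def f_def)
  qed
  have sub: "f ` S' \<subseteq> {..<N}"
  proof (rule image_subsetI)
    fix k assume "k \<in> S'"
    then have "2*k < 2*N" by (auto simp: S'_def)
    then have "\<sigma> (2*k) < 2*N" using permutes_in_image[OF \<sigma>, of "2*k"] by simp
    then show "f k \<in> {..<N}" unfolding f_def by (simp add: div2_lt)
  qed
  have mN: "m < N" using True jN by simp
  have cS: "card (f ` S') = N - 1" using card_image[OF inj] mN by (simp add: S'_def)
  define C where "C = {..<N} - f ` S'"
  have cC: "card C = 1" unfolding C_def using card_Diff_subset[OF finite_subset[OF sub finite_lessThan] sub] cS mN by simp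
  have bC: "\<sigma> (2*m) div 2 \<in> C" "\<sigma> (Suc (2*m)) div 2 \<in> C"
  proof -
    have lt: "\<sigma> (2*m) div 2 < N" "\<sigma> (Suc (2*m)) div 2 < N"
      using permutes_in_image[OF \<sigma>, of "2*m"] permutes_in_image[OF \<sigma>, of "Suc (2*m)"] mN by auto
    have "\<sigma> (2*m) div 2 \<notin> f ` S'" "\<sigma> (Suc (2*m)) div 2 \<notin> f ` S'"
      using inblock[of _ m] mN by (auto simp: S'_def)
    then show "\<sigma> (2*m) div 2 \<in> C" "\<sigma> (Suc (2*m)) div 2 \<in> C" using lt by (auto simp: C_def)
  qed
  from cC obtain z where "C = {z}" by (metis card_1_singletonE)
  with bC True show ?thesis by simp
qed

lemma symp_comb:
  fixes G :: "nat \<Rightarrow> nat \<Rightarrow> nat \<Rightarrow> 'a::comm_ring_1"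
  assumes supp: "\<And>j a b. j < N \<Longrightarrow> j \<noteq> m \<Longrightarrow> a div 2 \<noteq> b div 2 \<Longrightarrow> G j a b = 0"
  shows "(\<Sum>\<sigma>\<in>perms (2*N). of_int (sign \<sigma>) * (\<Prod>j<N. G j (\<sigma> (2*j)) (\<sigma> (Suc (2*j)))))
       = (\<Sum>\<pi>\<in>perms N. \<Prod>j<N. (G j (2 * \<pi> j) (Suc (2 * \<pi> j)) - G j (Suc (2 * \<pi> j)) (2 * \<pi> j)))"
proof -
  define t where "t \<sigma> = (of_int (sign \<sigma>) * (\<Prod>j<N. G j (\<sigma> (2*j)) (\<sigma> (Suc (2*j)))) :: 'a)" for \<sigma>
  have finP: "finite (perms (2*N))" by (rule finite_permutations) simp
  have "(\<Sum>\<sigma>\<in>perms (2*N). t \<sigma>) = (\<Sum>\<sigma>\<in>PP N. t \<sigma>)"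
  proof (rule sum.mono_neutral_right[OF finP])
    show "PP N \<subseteq> perms (2*N)" by (auto simp: PP_def)
    show "\<forall>\<sigma>\<in>perms (2*N) - PP N. t \<sigma> = 0"
    proof
      fix \<sigma> assume "\<sigma> \<in> perms (2*N) - PP N"
      then have \<sigma>: "\<sigma> permutes {..<2*N}" and nPP: "\<not> (\<forall>j<N. \<sigma> (2*j) div 2 = \<sigma> (Suc (2*j)) div 2)"
        by (auto simp: PP_def)
      have "\<exists>j<N. j \<noteq> m \<and> \<sigma> (2*j) div 2 \<noteq> \<sigma> (Suc (2*j)) div 2"
        using unmatched[OF \<sigma>, of m] nPP by blast
      then obtain j where "j < N" "j \<noteq> m" "\<sigma> (2*j) div 2 \<noteq> \<sigma> (Suc (2*j)) div 2" by blast
      then have "(\<Prod>j<N. G j (\<sigma> (2*j)) (\<sigma> (Suc (2*j)))) = 0"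
        by (intro prod_zero) (auto intro!: bexI[of _ j] supp)
      then show "t \<sigma> = 0" by (simp add: t_def)
    qed
  qed
  also have "\<dots> = (\<Sum>x\<in>perms N \<times> Pow {..<N}. t ((\<lambda>(\<pi>, E). sigPE N \<pi> E) x))"
    unfolding sigPE_image[symmetric] by (subst sum.reindex[OF sigPE_inj]) (simp add: comp_def)
  also have "\<dots> = (\<Sum>\<pi>\<in>perms N. \<Sum>E\<in>Pow {..<N}. t (sigPE N \<pi> E))"
    by (subst sum.cartesian_product) (simp add: case_prod_unfold)
  also have "\<dots> = (\<Sum>\<pi>\<in>perms N. \<Prod>j<N. (G j (2 * \<pi> j) (Suc (2 * \<pi> j)) - G j (Suc (2 * \<pi> j)) (2 * \<pi> j)))"
  proof (rule sum.cong[OF refl])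
    fix \<pi> assume "\<pi> \<in> perms N"
    then have \<pi>: "\<pi> permutes {..<N}" by simp
    define f1 where "f1 j = - G j (Suc (2 * \<pi> j)) (2 * \<pi> j)" for j
    define f2 where "f2 j = G j (2 * \<pi> j) (Suc (2 * \<pi> j))" for j
    have "(\<Prod>j<N. (G j (2 * \<pi> j) (Suc (2 * \<pi> j)) - G j (Suc (2 * \<pi> j)) (2 * \<pi> j)))
        = (\<Prod>j<N. f1 j + f2 j)" by (simp add: f1_def f2_def)
    also have "\<dots> = (\<Sum>X\<in>Pow {..<N}. (\<Prod>j\<in>X. f1 j) * (\<Prod>j\<in>{..<N} - X. f2 j))"
      by (rule prod_add) simp
    also have "\<dots> = (\<Sum>E\<in>Pow {..<N}. t (sigPE N \<pi> E))"
    proof (rule sum.cong[OF refl])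
      fix E assume "E \<in> Pow {..<N}"
      then have E: "E \<subseteq> {..<N}" by simp
      have "(\<Prod>j<N. G j (sigPE N \<pi> E (2*j)) (sigPE N \<pi> E (Suc (2*j))))
          = (\<Prod>j<N. if j \<in> E then G j (Suc (2 * \<pi> j)) (2 * \<pi> j) else f2 j)"
        by (intro prod.cong refl) (simp add: sigPE_even sigPE_odd f2_def)
      also have "\<dots> = (\<Prod>j\<in>E. G j (Suc (2 * \<pi> j)) (2 * \<pi> j)) * (\<Prod>j\<in>{..<N} - E. f2 j)"
      proof -
        have "{..<N} \<inter> {j. j \<in> E} = E" "{..<N} \<inter> - {j. j \<in> E} = {..<N} - E" using E by auto
        then show ?thesis by (simp add: prod.If_cases)
      qed
      finally have "t (sigPE N \<pi> E) = (-1) ^ card E * (\<Prod>j\<in>E. G j (Suc (2 * \<pi> j)) (2 * \<pi> j)) * (\<Prod>j\<in>{..<N} - E. f2 j)"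
        unfolding t_def sign_sigPE[OF \<pi> E] by (simp add: mult.assoc)
      also have "\<dots> = (\<Prod>j\<in>E. f1 j) * (\<Prod>j\<in>{..<N} - E. f2 j)"
        unfolding f1_def prod_uminus by simp
      finally show "(\<Prod>j\<in>E. f1 j) * (\<Prod>j\<in>{..<N} - E. f2 j) = t (sigPE N \<pi> E)" by simp
    qed
    finally show "(\<Sum>E\<in>Pow {..<N}. t (sigPE N \<pi> E)) = (\<Prod>j<N. (G j (2 * \<pi> j) (Suc (2 * \<pi> j)) - G j (Suc (2 * \<pi> j)) (2 * \<pi> j)))"
      by simp
  qed
  finally show ?thesis unfolding t_def .
qed



abbreviation cp :: "real poly \<Rightarrow> complex poly" where "cp \<equiv> map_poly complex_of_real"

lemma cp_add: "cp (f + g) = cp f + cp g"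
  by (rule poly_eqI) (simp add: coeff_map_poly)

lemma cp_mult: "cp (f * g) = cp f * cp g"
  by (rule poly_eqI) (simp add: coeff_map_poly coeff_mult)

lemma cp_monom: "cp (monom 1 p) = monom 1 p"
  by (simp add: map_poly_monom)

lemma poly_cp_XP: "poly (cp (monom 1 p * u)) w = w ^ p * poly (cp u) w"
  by (simp add: cp_mult cp_monom poly_monom)

lemma poly_cp_X: "poly (cp ([:0,1:] * u)) w = w * poly (cp u) w"
  using poly_cp_XP[of 1 u w] by (simp add: monom_Suc monom_0 one_pCons)

lemma poly_cp_pCons0: "poly (cp (pCons 0 u)) w = w * poly (cp u) w"
  by (simp add: map_poly_pCons)

lemma cnj_poly_cp: "cnj (poly (cp u) z) = poly (cp u) (cnj z)"
  by (rule poly_cnj_real) (simp add: coeff_map_poly)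

lemma degree_cp: "degree (cp u) = degree u"
  by (simp add: degree_map_poly)

lemma cp_monic: assumes "degree u = k \<and> lead_coeff u = 1" shows "degree (cp u) = k \<and> lead_coeff (cp u) = 1"
proof -
  have "coeff u k = 1" using assms by metis
  then show ?thesis using assms by (simp add: degree_cp coeff_map_poly)
qed

lemma poly_cp_sum: "poly (cp u) w = (\<Sum>a\<le>degree u. complex_of_real (coeff u a) * w ^ a)"
  by (simp add: poly_altdef degree_cp coeff_map_poly)

lemma sigma_finite_dA: "sigma_finite_measure dA"
  unfolding dA_def using sigma_finite_measure.sigma_finite_iff_density_finite'[OF sigma_finite_lborel, of "\<lambda>_. ennreal (1 / pi)"] by simp

lemma psf_dA: "product_sigma_finite (\<lambda>_::nat. dA)"
  unfolding product_sigma_finite_def using sigma_finite_dA by simp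

lemma conf_integral_prod:
  fixes \<phi> :: "nat \<Rightarrow> complex \<Rightarrow> complex"
  assumes "\<And>j. j < N \<Longrightarrow> integrable dA (\<phi> j)"
  shows "integrable (confM N) (\<lambda>z. \<Prod>j<N. \<phi> j (z j))"
    and "(\<integral>z. (\<Prod>j<N. \<phi> j (z j)) \<partial>confM N) = (\<Prod>j<N. integral\<^sup>L dA (\<phi> j))"
  unfolding confM_def
  using product_sigma_finite.product_integrable_prod[OF psf_dA, of "{..<N}" \<phi>]
    product_sigma_finite.product_integral_prod[OF psf_dA, of "{..<N}" \<phi>] assms
  by auto

lemma prod_even_odd: "(\<Prod>i<2*n. F i) = (\<Prod>j<n. F (2*j) * F (Suc (2*j)))"
  for F :: "nat \<Rightarrow> 'a::comm_monoid_mult"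
  by (induction n) (simp_all add: mult.assoc)

lemma prod_pairs_block:
  fixes f :: "nat \<Rightarrow> nat \<Rightarrow> 'a::comm_monoid_mult"
  shows "(\<Prod>a<2*N. \<Prod>b\<in>{a<..<2*N}. f a b) =
    (\<Prod>j<N. f (2*j) (Suc (2*j)) * (\<Prod>k\<in>{j<..<N}. f (2*j) (2*k) * f (Suc (2*j)) (2*k) * f (2*j) (Suc (2*k)) * f (Suc (2*j)) (Suc (2*k))))"
proof (induction N)
  case 0
  then show ?case by simp
next
  case (Suc N)
  define Y where "Y j k = f (2*j) (2*k) * f (Suc (2*j)) (2*k) * f (2*j) (Suc (2*k)) * f (Suc (2*j)) (Suc (2*k))" for j k
  have "(\<Prod>a<2*Suc N. \<Prod>b\<in>{a<..<2*Suc N}. f a b) = (\<Prod>a<Suc (Suc (2*N)). \<Prod>b\<in>{a<..<Suc (Suc (2*N))}. f a b)"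
    by simp
  also have "\<dots> = (\<Prod>a<2*N. \<Prod>b\<in>{a<..<2*N}. f a b) * (\<Prod>a<2*N. f a (2*N)) * ((\<Prod>a<2*N. f a (Suc (2*N))) * f (2*N) (Suc (2*N)))"
    unfolding prod_pairs_Suc by simp
  also have "\<dots> = (\<Prod>a<2*N. \<Prod>b\<in>{a<..<2*N}. f a b) * (f (2*N) (Suc (2*N)) * (\<Prod>j<N. Y j N))"
    unfolding prod_even_odd Y_def by (simp add: prod.distrib mult_ac)
  also have "\<dots> = (\<Prod>j<Suc N. f (2*j) (Suc (2*j)) * (\<Prod>k\<in>{j<..<Suc N}. Y j k))"
    unfolding Suc.IH Y_def[symmetric] prod.distrib prod_pairs_Suc by (simp add: mult_ac)
  finally show ?case unfolding Y_def .
qed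

locale ens =
  fixes \<omega> :: "complex \<Rightarrow> real" and P :: "nat \<Rightarrow> real poly" and b c :: "nat \<Rightarrow> real"
  assumes nonneg: "\<And>z. \<omega> z \<ge> 0"
    and finite_moments: "\<And>j k. integrable dA (\<lambda>z. z ^ j * cnj z ^ k * complex_of_real (\<omega> z))"
    and real_moments: "\<And>j k. Im (\<integral>z. z ^ j * cnj z ^ k * complex_of_real (\<omega> z) \<partial>dA) = 0"
    and pos_def: "\<And>f. f \<noteq> 0 \<Longrightarrow> Re (ip \<omega> f f) > 0"
    and monic: "\<And>k. degree (P k) = k \<and> lead_coeff (P k) = 1"
    and orth: "\<And>j k. j \<noteq> k \<Longrightarrow> ip \<omega> (P j) (P k) = 0"
    and rec0: "[:0, 1:] * P 0 = P 1 + smult (b 0) (P 0)"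
    and rec: "\<And>k. k \<ge> 1 \<Longrightarrow> [:0, 1:] * P k = P (k+1) + smult (b k) (P k) + smult (c k) (P (k-1))"
    and skew_nz: "\<And>l. hnorm \<omega> P (2*l+1) - c (2*l+1) * hnorm \<omega> P (2*l) \<noteq> 0"
begin

definition mm :: "nat \<Rightarrow> nat \<Rightarrow> real" where
  "mm a d = Re (\<integral>z. z ^ a * cnj z ^ d * complex_of_real (\<omega> z) \<partial>dA)"

lemma mom_eq: "(\<integral>z. z ^ a * cnj z ^ d * complex_of_real (\<omega> z) \<partial>dA) = complex_of_real (mm a d)"
  using real_moments[of a d] by (simp add: mm_def complex_eq_iff)

lemma mm_sym: "mm a d = mm d a"
proof -
  have "cnj (\<integral>z. z ^ a * cnj z ^ d * complex_of_real (\<omega> z) \<partial>dA) = (\<integral>z. cnj (z ^ a * cnj z ^ d * complex_of_real (\<omega> z)) \<partial>dA)"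
    by (rule Bochner_Integration.integral_cnj[symmetric])
  also have "\<dots> = (\<integral>z. z ^ d * cnj z ^ a * complex_of_real (\<omega> z) \<partial>dA)"
    by (rule Bochner_Integration.integral_cong) (simp_all add: mult.commute)
  finally have "(\<integral>z. z ^ d * cnj z ^ a * complex_of_real (\<omega> z) \<partial>dA) = cnj (\<integral>z. z ^ a * cnj z ^ d * complex_of_real (\<omega> z) \<partial>dA)" ..
  then show ?thesis by (simp add: mm_def)
qed

lemma INT:
  "integrable dA (\<lambda>w. poly (cp u) w * poly (cp v) (cnj w) * complex_of_real (\<omega> w))"
  "(\<integral>w. poly (cp u) w * poly (cp v) (cnj w) * complex_of_real (\<omega> w) \<partial>dA) = complex_of_real (Bf mm u v)"
proof -
  have pw: "poly (cp u) w * poly (cp v) (cnj w) * complex_of_real (\<omega> w) =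
      (\<Sum>a\<le>degree u. \<Sum>d\<le>degree v. complex_of_real (coeff u a * coeff v d) * (w ^ a * cnj w ^ d * complex_of_real (\<omega> w)))" for w
  proof -
    have e1: "poly (cp u) w * poly (cp v) (cnj w) = (\<Sum>a\<le>degree u. \<Sum>d\<le>degree v. (complex_of_real (coeff u a) * w^a) * (complex_of_real (coeff v d) * cnj w^d))"
      unfolding poly_cp_sum by (rule sum_product)
    show ?thesis unfolding e1 sum_distrib_right by (intro sum.cong refl) (simp add: algebra_simps)
  qed
  show "integrable dA (\<lambda>w. poly (cp u) w * poly (cp v) (cnj w) * complex_of_real (\<omega> w))"
    unfolding pw by (simp add: finite_moments)
  show "(\<integral>w. poly (cp u) w * poly (cp v) (cnj w) * complex_of_real (\<omega> w) \<partial>dA) = complex_of_real (Bf mm u v)"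
    unfolding pw
    by (simp add: integral_sum integrable_sum integrable_mult_right finite_moments mom_eq Bf_def)
qed

lemma ip_eq: "ip \<omega> f g = complex_of_real (Bf mm f g)"
  unfolding ip_def cnj_poly_cp using INT(2)[of f g] by simp

lemma hnorm_eq: "hnorm \<omega> P = (\<lambda>k. Bf mm (P k) (P k))"
  by (simp add: hnorm_def ip_eq fun_eq_iff)

sublocale opalg mm P b c
proof
  show "mm a d = mm d a" for a d by (rule mm_sym)
  show "f \<noteq> 0 \<Longrightarrow> Bf mm f f > 0" for f using pos_def[of f] by (simp add: ip_eq)
  show "degree (P k) = k \<and> lead_coeff (P k) = 1" for k by (rule monic)
  show "j \<noteq> k \<Longrightarrow> Bf mm (P j) (P k) = 0" for j k using orth[of j k] by (simp add: ip_eq)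
  show "[:0, 1:] * P 0 = P 1 + smult (b 0) (P 0)" by (rule rec0)
  show "k \<ge> 1 \<Longrightarrow> [:0, 1:] * P k = P (k+1) + smult (b k) (P k) + smult (c k) (P (k-1))" for k by (rule rec)
  show "Bf mm (P (2*l+1)) (P (2*l+1)) - c (2*l+1) * Bf mm (P (2*l)) (P (2*l)) \<noteq> 0" for l
    using skew_nz[of l] by (simp add: hnorm_eq)
qed


definition Pc where "Pc k = cp (P k)"

lemma Pc_monic: "degree (Pc k) = k \<and> lead_coeff (Pc k) = 1"
  unfolding Pc_def by (rule cp_monic[OF monic])

definition Psi :: "nat \<Rightarrow> nat \<Rightarrow> nat \<Rightarrow> nat \<Rightarrow> nat \<Rightarrow> nat \<Rightarrow> complex \<Rightarrow> complex" where
  "Psi p1 p2 m j a d w = poly (Pc a) w * poly (Pc d) (cnj w) * complex_of_real (\<omega> w) * (if j = m then w ^ p1 * cnj w ^ p2 else 1)"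

lemma Psi_eq: "Psi p1 p2 m j a d = (\<lambda>w. poly (cp (monom 1 (if j = m then p1 else 0) * P a)) w *
    poly (cp (monom 1 (if j = m then p2 else 0) * P d)) (cnj w) * complex_of_real (\<omega> w))"
  by (rule ext) (simp add: Psi_def poly_cp_XP Pc_def)

lemma Psi_int:
  "integrable dA (Psi p1 p2 m j a d)"
  "integral\<^sup>L dA (Psi p1 p2 m j a d) = complex_of_real (Bf mm (monom 1 (if j = m then p1 else 0) * P a) (monom 1 (if j = m then p2 else 0) * P d))"
  unfolding Psi_eq by (rule INT(1), rule INT(2))

definition DeltaC :: "nat \<Rightarrow> (nat \<Rightarrow> complex) \<Rightarrow> complex" where
  "DeltaC N z = (\<Prod>j<N. \<Prod>k\<in>{j<..<N}. (z k - z j))"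

lemma weightC_Delta: "complex_of_real (weightC \<omega> N z) = DeltaC N z * cnj (DeltaC N z) * (\<Prod>j<N. complex_of_real (\<omega> (z j)))"
proof -
  have "(\<Prod>j<N. \<Prod>k\<in>{j<..<N}. (cmod (z j - z k))\<^sup>2) = (cmod (DeltaC N z))\<^sup>2"
    unfolding DeltaC_def prod_norm[symmetric] prod_power_distrib by (simp add: norm_minus_commute)
  then have w: "weightC \<omega> N z = (cmod (DeltaC N z))\<^sup>2 * (\<Prod>j<N. \<omega> (z j))" by (simp add: weightC_def)
  have "complex_of_real (weightC \<omega> N z) = complex_of_real ((cmod (DeltaC N z))\<^sup>2) * complex_of_real (\<Prod>j<N. \<omega> (z j))"
    unfolding w by (simp only: of_real_mult)
  also have "\<dots> = DeltaC N z * cnj (DeltaC N z) * (\<Prod>j<N. complex_of_real (\<omega> (z j)))"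
    by (simp only: complex_norm_square of_real_prod)
  finally show ?thesis .
qed

lemma DeltaC_vdet: "DeltaC N z = (\<Sum>\<sigma>\<in>perms N. of_int (sign \<sigma>) * (\<Prod>j<N. poly (Pc (\<sigma> j)) (z j)))"
  unfolding DeltaC_def vandermonde[OF Pc_monic, symmetric] vdet_def ..

lemma cnj_DeltaC: "cnj (DeltaC N z) = (\<Sum>\<sigma>\<in>perms N. of_int (sign \<sigma>) * (\<Prod>j<N. poly (Pc (\<sigma> j)) (cnj (z j))))"
  unfolding DeltaC_vdet by (simp add: Pc_def cnj_poly_cp)

lemma prod_if_one: "(\<Prod>j<(N::nat). (if j = m then x j else 1)) = (if m < N then x m else (1::'a::comm_monoid_mult))"
  using prod.delta[OF finite_lessThan[of N], of m x] by simp

lemma weightC_expand: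
  "complex_of_real (weightC \<omega> N z) * (if m < N then z m ^ p1 * cnj (z m) ^ p2 else 1)
   = (\<Sum>\<sigma>\<in>perms N. \<Sum>\<tau>\<in>perms N. of_int (sign \<sigma>) * of_int (sign \<tau>) * (\<Prod>j<N. Psi p1 p2 m j (\<sigma> j) (\<tau> j) (z j)))"
proof -
  define C where "C = (\<Prod>j<N. complex_of_real (\<omega> (z j)))"
  define D where "D = (\<Prod>j<N. (if j = m then z j ^ p1 * cnj (z j) ^ p2 else 1))"
  have pr: "(\<Prod>j<N. Psi p1 p2 m j (\<sigma> j) (\<tau> j) (z j)) = (\<Prod>j<N. poly (Pc (\<sigma> j)) (z j)) * (\<Prod>j<N. poly (Pc (\<tau> j)) (cnj (z j))) * C * D"
    for \<sigma> \<tau> unfolding Psi_def C_def D_def by (simp add: prod.distrib)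
  have "(\<Sum>\<sigma>\<in>perms N. \<Sum>\<tau>\<in>perms N. of_int (sign \<sigma>) * of_int (sign \<tau>) * (\<Prod>j<N. Psi p1 p2 m j (\<sigma> j) (\<tau> j) (z j)))
      = (\<Sum>\<sigma>\<in>perms N. \<Sum>\<tau>\<in>perms N. (of_int (sign \<sigma>) * (\<Prod>j<N. poly (Pc (\<sigma> j)) (z j))) * (of_int (sign \<tau>) * (\<Prod>j<N. poly (Pc (\<tau> j)) (cnj (z j)))) * (C * D))"
    unfolding pr by (simp add: algebra_simps)
  also have "\<dots> = DeltaC N z * cnj (DeltaC N z) * (C * D)"
    by (simp only: cnj_DeltaC) (simp only: DeltaC_vdet sum_distrib_left sum_distrib_right, rule sum.swap)
  also have "D = (if m < N then z m ^ p1 * cnj (z m) ^ p2 else 1)" unfolding D_def by (rule prod_if_one)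
  finally show ?thesis unfolding weightC_Delta C_def by (simp add: algebra_simps)
qed

lemma sum_perm_integrable:
  fixes T :: "(nat \<Rightarrow> nat) \<Rightarrow> (nat \<Rightarrow> nat) \<Rightarrow> nat \<Rightarrow> complex \<Rightarrow> complex"
  assumes "\<And>\<sigma> \<tau> j. integrable dA (T \<sigma> \<tau> j)"
  shows "integrable (confM N) (\<lambda>z. \<Sum>\<sigma>\<in>S. \<Sum>\<tau>\<in>S'. cc \<sigma> \<tau> * (\<Prod>j<N. T \<sigma> \<tau> j (z j)))"
    and "(\<integral>z. (\<Sum>\<sigma>\<in>S. \<Sum>\<tau>\<in>S'. cc \<sigma> \<tau> * (\<Prod>j<N. T \<sigma> \<tau> j (z j))) \<partial>confM N)
         = (\<Sum>\<sigma>\<in>S. \<Sum>\<tau>\<in>S'. cc \<sigma> \<tau> * (\<Prod>j<N. integral\<^sup>L dA (T \<sigma> \<tau> j)))"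
proof -
  have i: "integrable (confM N) (\<lambda>z. \<Prod>j<N. T \<sigma> \<tau> j (z j))" for \<sigma> \<tau> by (rule conf_integral_prod(1)) (rule assms)
  show "integrable (confM N) (\<lambda>z. \<Sum>\<sigma>\<in>S. \<Sum>\<tau>\<in>S'. cc \<sigma> \<tau> * (\<Prod>j<N. T \<sigma> \<tau> j (z j)))"
    using i by simp
  show "(\<integral>z. (\<Sum>\<sigma>\<in>S. \<Sum>\<tau>\<in>S'. cc \<sigma> \<tau> * (\<Prod>j<N. T \<sigma> \<tau> j (z j))) \<partial>confM N)
         = (\<Sum>\<sigma>\<in>S. \<Sum>\<tau>\<in>S'. cc \<sigma> \<tau> * (\<Prod>j<N. integral\<^sup>L dA (T \<sigma> \<tau> j)))"
    using i by (simp add: Bochner_Integration.integral_sum conf_integral_prod(2) assms)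
qed

lemma intC:
  "integrable (confM N) (\<lambda>z. complex_of_real (weightC \<omega> N z) * (if m < N then z m ^ p1 * cnj (z m) ^ p2 else 1))"
  "(\<integral>z. complex_of_real (weightC \<omega> N z) * (if m < N then z m ^ p1 * cnj (z m) ^ p2 else 1) \<partial>confM N)
    = (\<Sum>\<sigma>\<in>perms N. \<Prod>j<N. (if j = m then complex_of_real (Bf mm (monom 1 p1 * P (\<sigma> j)) (monom 1 p2 * P (\<sigma> j)))
                                  else complex_of_real (hh (\<sigma> j))))"
proof -
  note SP = sum_perm_integrable[where T = "\<lambda>\<sigma> \<tau> j. Psi p1 p2 m j (\<sigma> j) (\<tau> j)" and N = N and S = "perms N" and S' = "perms N"
      and cc = "\<lambda>\<sigma> \<tau>. of_int (sign \<sigma>) * of_int (sign \<tau>)", OF Psi_int(1)]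
  show "integrable (confM N) (\<lambda>z. complex_of_real (weightC \<omega> N z) * (if m < N then z m ^ p1 * cnj (z m) ^ p2 else 1))"
    unfolding weightC_expand by (rule SP(1))
  define M where "M j a d = complex_of_real (Bf mm (monom 1 (if j = m then p1 else 0) * P a) (monom 1 (if j = m then p2 else 0) * P d))" for j a d
  have "(\<integral>z. complex_of_real (weightC \<omega> N z) * (if m < N then z m ^ p1 * cnj (z m) ^ p2 else 1) \<partial>confM N)
     = (\<Sum>\<sigma>\<in>perms N. \<Sum>\<tau>\<in>perms N. of_int (sign \<sigma>) * of_int (sign \<tau>) * (\<Prod>j<N. M j (\<sigma> j) (\<tau> j)))"
    unfolding weightC_expand SP(2) Psi_int(2) M_def ..
  also have "\<dots> = (\<Sum>\<sigma>\<in>perms N. \<Prod>j<N. M j (\<sigma> j) (\<sigma> j))"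
    by (rule complex_comb[where m = m]) (simp add: M_def orth)
  also have "\<dots> = (\<Sum>\<sigma>\<in>perms N. \<Prod>j<N. (if j = m then complex_of_real (Bf mm (monom 1 p1 * P (\<sigma> j)) (monom 1 p2 * P (\<sigma> j)))
                                  else complex_of_real (hh (\<sigma> j))))"
    by (intro sum.cong prod.cong refl) (simp add: M_def)
  finally show "(\<integral>z. complex_of_real (weightC \<omega> N z) * (if m < N then z m ^ p1 * cnj (z m) ^ p2 else 1) \<partial>confM N)
    = (\<Sum>\<sigma>\<in>perms N. \<Prod>j<N. (if j = m then complex_of_real (Bf mm (monom 1 p1 * P (\<sigma> j)) (monom 1 p2 * P (\<sigma> j)))
                                  else complex_of_real (hh (\<sigma> j))))" .
qed

lemma momC_eq: "momC \<omega> p1 p2 N = complex_of_real (\<Sum>k<N. Bf mm (monom 1 p1 * P k) (monom 1 p2 * P k) / hh k)"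
proof -
  define F where "F k = complex_of_real (Bf mm (monom 1 p1 * P k) (monom 1 p2 * P k))" for k
  define h where "h k = complex_of_real (hh k)" for k
  have hnz: "h k \<noteq> 0" for k using hh_nz by (simp add: h_def)
  have num: "(\<integral>z. power_sum p1 p2 N z * complex_of_real (weightC \<omega> N z) \<partial>confM N)
      = (\<Sum>m<N. \<integral>z. complex_of_real (weightC \<omega> N z) * (if m < N then z m ^ p1 * cnj (z m) ^ p2 else 1) \<partial>confM N)"
  proof -
    have pw: "power_sum p1 p2 N z * complex_of_real (weightC \<omega> N z) =
        (\<Sum>m<N. complex_of_real (weightC \<omega> N z) * (if m < N then z m ^ p1 * cnj (z m) ^ p2 else 1))" for z
      unfolding power_sum_def sum_distrib_right by (intro sum.cong refl) (simp add: mult.commute)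
    have "(\<integral>z. power_sum p1 p2 N z * complex_of_real (weightC \<omega> N z) \<partial>confM N)
       = (\<integral>z. (\<Sum>m<N. complex_of_real (weightC \<omega> N z) * (if m < N then z m ^ p1 * cnj (z m) ^ p2 else 1)) \<partial>confM N)"
      by (rule Bochner_Integration.integral_cong[OF refl], rule pw)
    also have "\<dots> = (\<Sum>m<N. \<integral>z. complex_of_real (weightC \<omega> N z) * (if m < N then z m ^ p1 * cnj (z m) ^ p2 else 1) \<partial>confM N)"
      by (rule Bochner_Integration.integral_sum) (rule intC(1))
    finally show ?thesis .
  qed
  have den: "complex_of_real (\<integral>z. weightC \<omega> N z \<partial>confM N)
      = (\<integral>z. complex_of_real (weightC \<omega> N z) * (if N < N then z N ^ p1 * cnj (z N) ^ p2 else 1) \<partial>confM N)"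
    by simp
  have "momC \<omega> p1 p2 N = (\<Sum>m<N. \<Sum>\<sigma>\<in>perms N. \<Prod>j<N. (if j = m then F (\<sigma> j) else h (\<sigma> j)))
                         / (\<Sum>\<sigma>\<in>perms N. \<Prod>j<N. h (\<sigma> j))"
    unfolding momC_def ens_expect_def num den intC(2) F_def h_def by simp
  also have "\<dots> = (\<Sum>k<N. F k / h k)"
  proof -
    have hnz': "\<And>k. k < N \<Longrightarrow> h k \<noteq> 0" using hnz by simp
    have n: "(\<Sum>m<N. \<Sum>\<sigma>\<in>perms N. \<Prod>j<N. (if j = m then F (\<sigma> j) else h (\<sigma> j)))
       = of_nat (fact N) * (\<Prod>k<N. h k) * (\<Sum>k<N. F k / h k)" by (rule final_comb(2)[OF hnz'])
    have d: "(\<Sum>\<sigma>\<in>perms N. \<Prod>j<N. h (\<sigma> j)) = of_nat (fact N) * (\<Prod>k<N. h k)"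
      by (rule final_comb(1)[OF hnz'])
    have "(\<Prod>k<N. h k) \<noteq> 0" using hnz by (simp add: prod_zero_iff)
    then show ?thesis unfolding n d by simp
  qed
  finally show ?thesis by (simp add: F_def h_def)
qed


definition Qc where "Qc k = cp (Q k)"

lemma Qc_monic: "degree (Qc k) = k \<and> lead_coeff (Qc k) = 1"
  unfolding Qc_def by (rule cp_monic[OF Q_monic])

definition Theta :: "nat \<Rightarrow> nat \<Rightarrow> nat \<Rightarrow> nat \<Rightarrow> nat \<Rightarrow> nat \<Rightarrow> complex \<Rightarrow> complex" where
  "Theta p1 p2 m j a d w = poly (Qc a) w * poly (Qc d) (cnj w) * (w - cnj w) * complex_of_real (\<omega> w)
      * (if j = m then w ^ p1 * cnj w ^ p2 else 1)"

lemma Theta_eq: "Theta p1 p2 m j a d = (\<lambda>w.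
    poly (cp ([:0,1:] * (monom 1 (if j = m then p1 else 0) * Q a))) w * poly (cp (monom 1 (if j = m then p2 else 0) * Q d)) (cnj w) * complex_of_real (\<omega> w)
  - poly (cp (monom 1 (if j = m then p1 else 0) * Q a)) w * poly (cp ([:0,1:] * (monom 1 (if j = m then p2 else 0) * Q d))) (cnj w) * complex_of_real (\<omega> w))"
  by (rule ext) (simp add: Theta_def poly_cp_X poly_cp_pCons0 poly_cp_XP Qc_def algebra_simps)

lemma Theta_int:
  "integrable dA (Theta p1 p2 m j a d)"
  "integral\<^sup>L dA (Theta p1 p2 m j a d) = complex_of_real (g (monom 1 (if j = m then p1 else 0) * Q a) (monom 1 (if j = m then p2 else 0) * Q d))"
  unfolding Theta_eq
  by (simp_all add: INT Bochner_Integration.integral_diff g_def)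

definition wv :: "(nat \<Rightarrow> complex) \<Rightarrow> nat \<Rightarrow> complex" where
  "wv z a = (if even a then z (a div 2) else cnj (z (a div 2)))"

lemma wv_even[simp]: "wv z (2*j) = z j" and wv_odd[simp]: "wv z (Suc (2*j)) = cnj (z j)"
  by (simp_all add: wv_def)

definition DeltaH :: "nat \<Rightarrow> (nat \<Rightarrow> complex) \<Rightarrow> complex" where
  "DeltaH N z = (\<Prod>a<2*N. \<Prod>b\<in>{a<..<2*N}. (wv z b - wv z a))"

lemma weightH_Delta:
  "complex_of_real (weightH \<omega> N z) = DeltaH N z * (\<Prod>j<N. (z j - cnj (z j)) * complex_of_real (\<omega> (z j)))"
proof -
  define Y where "Y j k = (z k - z j) * (z k - cnj (z j)) * (cnj (z k) - z j) * (cnj (z k) - cnj (z j))" for j k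
  define cc where "cc j = cnj (z j) - z j" for j
  define e where "e j = (z j - cnj (z j)) * complex_of_real (\<omega> (z j))" for j
  have D: "DeltaH N z = (\<Prod>j<N. cc j * (\<Prod>k\<in>{j<..<N}. Y j k))"
    unfolding DeltaH_def prod_pairs_block by (simp add: Y_def cc_def)
  have y: "complex_of_real ((cmod (z j - z k))\<^sup>2) * complex_of_real ((cmod (z j - cnj (z k)))\<^sup>2) = Y j k" for j k
  proof -
    have h1: "complex_of_real ((cmod (z j - z k))\<^sup>2) = (z k - z j) * (cnj (z k) - cnj (z j))"
      by (subst norm_minus_commute) (simp only: complex_norm_square complex_cnj_diff)
    have h2: "complex_of_real ((cmod (z j - cnj (z k)))\<^sup>2) = (z k - cnj (z j)) * (cnj (z k) - z j)"
      unfolding complex_norm_square by (simp add: algebra_simps)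
    show ?thesis unfolding h1 h2 Y_def by (simp add: algebra_simps)
  qed
  have ej: "complex_of_real ((cmod (z j - cnj (z j)))\<^sup>2) * complex_of_real (\<omega> (z j)) = cc j * e j" for j
    unfolding complex_norm_square by (simp add: cc_def e_def algebra_simps)
  have "complex_of_real (weightH \<omega> N z) = (\<Prod>j<N. \<Prod>k\<in>{j<..<N}. Y j k) * (\<Prod>j<N. cc j * e j)"
    unfolding weightH_def of_real_mult of_real_prod y ej ..
  also have "\<dots> = DeltaH N z * (\<Prod>j<N. e j)"
    unfolding D prod.distrib by (simp add: mult_ac)
  finally show ?thesis by (simp add: e_def)
qed

lemma DeltaH_vdet: "DeltaH N z = (\<Sum>\<sigma>\<in>perms (2*N). of_int (sign \<sigma>) *
     (\<Prod>j<N. poly (Qc (\<sigma> (2*j))) (z j) * poly (Qc (\<sigma> (Suc (2*j)))) (cnj (z j))))"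
  unfolding DeltaH_def vandermonde[OF Qc_monic, symmetric] vdet_def prod_even_odd by simp

lemma weightH_expand:
  "complex_of_real (weightH \<omega> N z) * (if m < N then z m ^ p1 * cnj (z m) ^ p2 else 1)
   = (\<Sum>\<sigma>\<in>perms (2*N). of_int (sign \<sigma>) * (\<Prod>j<N. Theta p1 p2 m j (\<sigma> (2*j)) (\<sigma> (Suc (2*j))) (z j)))"
proof -
  define E where "E = (\<Prod>j<N. (z j - cnj (z j)) * complex_of_real (\<omega> (z j)))"
  define D where "D = (\<Prod>j<N. (if j = m then z j ^ p1 * cnj (z j) ^ p2 else 1))"
  have pr: "(\<Prod>j<N. Theta p1 p2 m j (\<sigma> (2*j)) (\<sigma> (Suc (2*j))) (z j)) =
      (\<Prod>j<N. poly (Qc (\<sigma> (2*j))) (z j) * poly (Qc (\<sigma> (Suc (2*j)))) (cnj (z j))) * E * D" for \<sigma>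
    unfolding Theta_def E_def D_def by (simp add: prod.distrib mult_ac)
  have "(\<Sum>\<sigma>\<in>perms (2*N). of_int (sign \<sigma>) * (\<Prod>j<N. Theta p1 p2 m j (\<sigma> (2*j)) (\<sigma> (Suc (2*j))) (z j)))
      = DeltaH N z * E * D"
    unfolding pr DeltaH_vdet sum_distrib_right by (simp add: mult_ac)
  also have "D = (if m < N then z m ^ p1 * cnj (z m) ^ p2 else 1)" unfolding D_def by (rule prod_if_one)
  finally show ?thesis unfolding weightH_Delta E_def by simp
qed

lemma sum_perm_integrable1:
  fixes T :: "(nat \<Rightarrow> nat) \<Rightarrow> nat \<Rightarrow> complex \<Rightarrow> complex"
  assumes "\<And>\<sigma> j. integrable dA (T \<sigma> j)"
  shows "integrable (confM N) (\<lambda>z. \<Sum>\<sigma>\<in>S. cc \<sigma> * (\<Prod>j<N. T \<sigma> j (z j)))"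
    and "(\<integral>z. (\<Sum>\<sigma>\<in>S. cc \<sigma> * (\<Prod>j<N. T \<sigma> j (z j))) \<partial>confM N)
         = (\<Sum>\<sigma>\<in>S. cc \<sigma> * (\<Prod>j<N. integral\<^sup>L dA (T \<sigma> j)))"
proof -
  have i: "integrable (confM N) (\<lambda>z. \<Prod>j<N. T \<sigma> j (z j))" for \<sigma> by (rule conf_integral_prod(1)) (rule assms)
  show "integrable (confM N) (\<lambda>z. \<Sum>\<sigma>\<in>S. cc \<sigma> * (\<Prod>j<N. T \<sigma> j (z j)))"
    using i by simp
  show "(\<integral>z. (\<Sum>\<sigma>\<in>S. cc \<sigma> * (\<Prod>j<N. T \<sigma> j (z j))) \<partial>confM N)
         = (\<Sum>\<sigma>\<in>S. cc \<sigma> * (\<Prod>j<N. integral\<^sup>L dA (T \<sigma> j)))"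
    using i by (simp add: Bochner_Integration.integral_sum conf_integral_prod(2) assms)
qed

lemma intH:
  "integrable (confM N) (\<lambda>z. complex_of_real (weightH \<omega> N z) * (if m < N then z m ^ p1 * cnj (z m) ^ p2 else 1))"
  "(\<integral>z. complex_of_real (weightH \<omega> N z) * (if m < N then z m ^ p1 * cnj (z m) ^ p2 else 1) \<partial>confM N)
    = (\<Sum>\<pi>\<in>perms N. \<Prod>j<N. (if j = m then complex_of_real (Phi p1 p2 (\<pi> j)) else complex_of_real (2 * rho (\<pi> j))))"
proof -
  note SP = sum_perm_integrable1[where T = "\<lambda>\<sigma> j. Theta p1 p2 m j (\<sigma> (2*j)) (\<sigma> (Suc (2*j)))" and N = N and S = "perms (2*N)"
      and cc = "\<lambda>\<sigma>. of_int (sign \<sigma>)", OF Theta_int(1)]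
  show "integrable (confM N) (\<lambda>z. complex_of_real (weightH \<omega> N z) * (if m < N then z m ^ p1 * cnj (z m) ^ p2 else 1))"
    unfolding weightH_expand by (rule SP(1))
  define G where "G j a d = complex_of_real (g (monom 1 (if j = m then p1 else 0) * Q a) (monom 1 (if j = m then p2 else 0) * Q d))" for j a d
  have "(\<integral>z. complex_of_real (weightH \<omega> N z) * (if m < N then z m ^ p1 * cnj (z m) ^ p2 else 1) \<partial>confM N)
     = (\<Sum>\<sigma>\<in>perms (2*N). of_int (sign \<sigma>) * (\<Prod>j<N. G j (\<sigma> (2*j)) (\<sigma> (Suc (2*j)))))"
    unfolding weightH_expand SP(2) Theta_int(2) G_def ..
  also have "\<dots> = (\<Sum>\<pi>\<in>perms N. \<Prod>j<N. (G j (2 * \<pi> j) (Suc (2 * \<pi> j)) - G j (Suc (2 * \<pi> j)) (2 * \<pi> j)))"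
    by (rule symp_comb[where m = m]) (simp add: G_def gQ_support)
  also have "\<dots> = (\<Sum>\<pi>\<in>perms N. \<Prod>j<N. (if j = m then complex_of_real (Phi p1 p2 (\<pi> j)) else complex_of_real (2 * rho (\<pi> j))))"
  proof (intro sum.cong prod.cong refl)
    fix \<pi> j
    show "G j (2 * \<pi> j) (Suc (2 * \<pi> j)) - G j (Suc (2 * \<pi> j)) (2 * \<pi> j) =
        (if j = m then complex_of_real (Phi p1 p2 (\<pi> j)) else complex_of_real (2 * rho (\<pi> j)))"
    proof (cases "j = m")
      case True then show ?thesis by (simp add: G_def Phi_def)
    next
      case False then show ?thesis by (simp add: G_def gQ_pair gQ_pair')
    qed
  qed
  finally show "(\<integral>z. complex_of_real (weightH \<omega> N z) * (if m < N then z m ^ p1 * cnj (z m) ^ p2 else 1) \<partial>confM N)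
    = (\<Sum>\<pi>\<in>perms N. \<Prod>j<N. (if j = m then complex_of_real (Phi p1 p2 (\<pi> j)) else complex_of_real (2 * rho (\<pi> j))))" .
qed

lemma momH_eq: "momH \<omega> p1 p2 N = complex_of_real (\<Sum>k<N. Phi p1 p2 k / (2 * rho k))"
proof -
  define F where "F k = complex_of_real (Phi p1 p2 k)" for k
  define h where "h k = complex_of_real (2 * rho k)" for k
  have hnz: "h k \<noteq> 0" for k using rho_nz by (simp add: h_def)
  have num: "(\<integral>z. power_sum p1 p2 N z * complex_of_real (weightH \<omega> N z) \<partial>confM N)
      = (\<Sum>m<N. \<integral>z. complex_of_real (weightH \<omega> N z) * (if m < N then z m ^ p1 * cnj (z m) ^ p2 else 1) \<partial>confM N)"
  proof -
    have pw: "power_sum p1 p2 N z * complex_of_real (weightH \<omega> N z) =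
        (\<Sum>m<N. complex_of_real (weightH \<omega> N z) * (if m < N then z m ^ p1 * cnj (z m) ^ p2 else 1))" for z
      unfolding power_sum_def sum_distrib_right by (intro sum.cong refl) (simp add: mult.commute)
    have "(\<integral>z. power_sum p1 p2 N z * complex_of_real (weightH \<omega> N z) \<partial>confM N)
       = (\<integral>z. (\<Sum>m<N. complex_of_real (weightH \<omega> N z) * (if m < N then z m ^ p1 * cnj (z m) ^ p2 else 1)) \<partial>confM N)"
      by (rule Bochner_Integration.integral_cong[OF refl], rule pw)
    also have "\<dots> = (\<Sum>m<N. \<integral>z. complex_of_real (weightH \<omega> N z) * (if m < N then z m ^ p1 * cnj (z m) ^ p2 else 1) \<partial>confM N)"
      by (rule Bochner_Integration.integral_sum) (rule intH(1))
    finally show ?thesis .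
  qed
  have den: "complex_of_real (\<integral>z. weightH \<omega> N z \<partial>confM N)
      = (\<integral>z. complex_of_real (weightH \<omega> N z) * (if N < N then z N ^ p1 * cnj (z N) ^ p2 else 1) \<partial>confM N)"
    by simp
  have "momH \<omega> p1 p2 N = (\<Sum>m<N. \<Sum>\<pi>\<in>perms N. \<Prod>j<N. (if j = m then F (\<pi> j) else h (\<pi> j)))
                         / (\<Sum>\<pi>\<in>perms N. \<Prod>j<N. h (\<pi> j))"
    unfolding momH_def ens_expect_def num den intH(2) F_def h_def by simp
  also have "\<dots> = (\<Sum>k<N. F k / h k)"
  proof -
    have hnz': "\<And>k. k < N \<Longrightarrow> h k \<noteq> 0" using hnz by simp
    have n: "(\<Sum>m<N. \<Sum>\<sigma>\<in>perms N. \<Prod>j<N. (if j = m then F (\<sigma> j) else h (\<sigma> j)))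
       = of_nat (fact N) * (\<Prod>k<N. h k) * (\<Sum>k<N. F k / h k)" by (rule final_comb(2)[OF hnz'])
    have d: "(\<Sum>\<sigma>\<in>perms N. \<Prod>j<N. h (\<sigma> j)) = of_nat (fact N) * (\<Prod>k<N. h k)"
      by (rule final_comb(1)[OF hnz'])
    have "(\<Prod>k<N. h k) \<noteq> 0" using hnz by (simp add: prod_zero_iff)
    then show ?thesis unfolding n d by simp
  qed
  finally show ?thesis by (simp add: F_def h_def)
qed

end


theorem mainTheorem2:
  fixes \<omega> :: "complex \<Rightarrow> real" and P :: "nat \<Rightarrow> real poly" and b c :: "nat \<Rightarrow> real"
    and p1 p2 q N :: nat
  assumes nonneg: "\<And>z. \<omega> z \<ge> 0"
    and finite_moments: "\<And>j k. integrable dA (\<lambda>z. z ^ j * cnj z ^ k * complex_of_real (\<omega> z))"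
    and real_moments: "\<And>j k. Im (\<integral>z. z ^ j * cnj z ^ k * complex_of_real (\<omega> z) \<partial>dA) = 0"
    and pos_def: "\<And>f. f \<noteq> 0 \<Longrightarrow> Re (ip \<omega> f f) > 0"
    and monic: "\<And>k. degree (P k) = k \<and> lead_coeff (P k) = 1"
    and orth: "\<And>j k. j \<noteq> k \<Longrightarrow> ip \<omega> (P j) (P k) = 0"
    and rec0: "[:0, 1:] * P 0 = P 1 + smult (b 0) (P 0)"
    and rec: "\<And>k. k \<ge> 1 \<Longrightarrow> [:0, 1:] * P k = P (k+1) + smult (b k) (P k) + smult (c k) (P (k-1))"
    and skew_nz: "\<And>l. hnorm \<omega> P (2*l+1) - c (2*l+1) * hnorm \<omega> P (2*l) \<noteq> 0"
    and N: "N \<ge> 1"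
  shows
    "momC \<omega> p1 p2 N = complex_of_real
        (\<Sum>k<N. \<Sum>j\<in>{k - min p1 p2 .. k + min p1 p2}.
           hnorm \<omega> P j / hnorm \<omega> P k * Acoef P p1 j k * Acoef P p2 j k)
   \<and> momC \<omega> q 0 N = complex_of_real (\<Sum>k<N. Acoef P q k k)
   \<and> momH \<omega> p1 p2 N = complex_of_real
        (1/2 * (\<Sum>k<N. frak_m (hnorm \<omega> P) c (Acoef P) p1 p2 k))
   \<and> momH \<omega> q 0 N = 1/2 * momC \<omega> q 0 (2*N)
        - complex_of_real (1/2 * (\<Sum>j<N. mu (hnorm \<omega> P) c N j * Acoef P q (2*N) (2*j)))"
proof -
  interpret E: ens \<omega> P b c
    by (rule ens.intro) (fact nonneg finite_moments real_moments pos_def monic orth rec0 rec skew_nz)+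
  have hn: "hnorm \<omega> P = (\<lambda>k. Bf E.mm (P k) (P k))" by (rule E.hnorm_eq)
  have C: "momC \<omega> r1 r2 M = complex_of_real
        (\<Sum>k<M. \<Sum>j\<in>{k - min r1 r2 .. k + min r1 r2}.
           hnorm \<omega> P j / hnorm \<omega> P k * Acoef P r1 j k * Acoef P r2 j k)" for r1 r2 M
    unfolding E.momC_eq E.complex_diag hn by simp
  have C0: "momC \<omega> q 0 M = complex_of_real (\<Sum>k<M. Acoef P q k k)" for M
    unfolding C by (simp add: E.A0 E.hh_nz hn)
  have H: "momH \<omega> r1 r2 M = complex_of_real (1/2 * (\<Sum>k<M. frak_m (hnorm \<omega> P) c (Acoef P) r1 r2 k))" for r1 r2 M
    unfolding E.momH_eq E.Phi_eq hn sum_distrib_left by (intro arg_cong[where f = complex_of_real] sum.cong refl) (simp add: E.rho_nz)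
  have H0: "momH \<omega> q 0 N = 1/2 * momC \<omega> q 0 (2*N)
        - complex_of_real (1/2 * (\<Sum>j<N. mu (hnorm \<omega> P) c N j * Acoef P q (2*N) (2*j)))"
    unfolding H C0 hn E.holo_sum by (simp add: algebra_simps)
  show ?thesis using C C0 H H0 by blast
qed

end
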